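(* Under the standing setup below, if $\beta_n\to\infty$ and $\beta_nn^{-\alpha}\to0$, then $Z_n/\mathbb E[Z_n]\to1$ in probability and $\dfrac{Z_n}{C(q)\,n\,\beta_n^{-1/\alpha}\,\Gamma(\frac1\alpha+1)}\to1$ in probability.
   Context: Standing setup: Fix an integer $d\ge 2$; let $\mathbb S^{d-1}\subset\mathbb R^d$ be the unit sphere with surface measure $\sigma$. Fix $q\in\mathbb S^{d-1}$. Let $x_1,x_2,\dots$ be i.i.d. random vectors on $\mathbb S^{d-1}$ with law $\rho(x)\,d\sigma(x)$, where $\rho$ is a $C^2$ probability density on $\mathbb S^{d-1}$ with $\rho(q)>0$. Let $(\beta_n)$ be positive reals, $\alpha=2/(d-1)$, $T_i=1-\langle q,x_i\rangle$, $Z_n=\sum_{j=1}^ne^{-\beta_nT_j}$, and $C(q)=\frac{2^{1/\alpha}\sigma_{d-2}}{d-1}\rho(q)$ with $\sigma_{d-2}$ the surface area of $\mathbb S^{d-2}$. *)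

theory Defs
  imports "HOL-Probability.Probability"
begin

text \<open>Surface measure on the unit sphere of the Euclidean space 'a, obtained via the
  cone construction: sigma(A) = d * Leb{t x : x in A, 0 < t <= 1}, i.e. d times the
  push-forward of Lebesgue measure on the closed unit ball under x |-> x/|x|.\<close>
definition sphere_surface_measure :: "('a::euclidean_space) measure" where
  "sphere_surface_measure =
     scale_measure (ennreal (real DIM('a)))
       (distr (density lborel (indicator (cball 0 1))) borel sgn)"

text \<open>Surface area of the unit sphere S^{k} in R^{k+1}: (k+1) times the volume of the
  unit ball in R^{k+1}.\<close>
definition sphere_area :: "nat \<Rightarrow> real" where
  "sphere_area k = real (k + 1) * unit_ball_vol (real (k + 1))"

definition C2_on :: "('a::euclidean_space) set \<Rightarrow> ('a \<Rightarrow> real) \<Rightarrow> bool" where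
  "C2_on U g \<longleftrightarrow> (\<exists>D :: 'a \<Rightarrow> ('a \<Rightarrow>\<^sub>L real). \<exists>D2 :: 'a \<Rightarrow> ('a \<Rightarrow>\<^sub>L ('a \<Rightarrow>\<^sub>L real)).
      (\<forall>x\<in>U. (g has_derivative blinfun_apply (D x)) (at x)) \<and>
      (\<forall>x\<in>U. (D has_derivative blinfun_apply (D2 x)) (at x)) \<and>
      continuous_on U D2)"

definition C2_on_sphere :: "(('a::euclidean_space) \<Rightarrow> real) \<Rightarrow> bool" where
  "C2_on_sphere \<rho> \<longleftrightarrow> (\<exists>U g. open U \<and> sphere 0 1 \<subseteq> U \<and> C2_on U g \<and>
      (\<forall>x\<in>sphere 0 1. g x = \<rho> x))"

definition conv_in_prob :: "'a measure \<Rightarrow> (nat \<Rightarrow> 'a \<Rightarrow> real) \<Rightarrow> ('a \<Rightarrow> real) \<Rightarrow> bool" where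
  "conv_in_prob M Y L \<longleftrightarrow>
     (\<forall>e>0. (\<lambda>n. measure M {\<omega>\<in>space M. \<bar>Y n \<omega> - L \<omega>\<bar> > e}) \<longlonglongrightarrow> 0)"

end

theory Submission
  imports Defs "HOL-Real_Asymp.Real_Asymp"
begin

lemma sets_ssm [simp, measurable_cong]:
  "sets (sphere_surface_measure :: 'a::euclidean_space measure) = sets borel"
  by (simp add: sphere_surface_measure_def)

lemma space_ssm [simp]:
  "space (sphere_surface_measure :: 'a::euclidean_space measure) = UNIV"
  using sets_eq_imp_space_eq[OF sets_ssm] by simp

lemma nn_integral_ssm:
  fixes H :: "'a::euclidean_space \<Rightarrow> ennreal"
  assumes [measurable]: "H \<in> borel_measurable borel"
  shows "(\<integral>\<^sup>+ y. H y \<partial>sphere_surface_measure) =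
    ennreal (real DIM('a)) * (\<integral>\<^sup>+ x. indicator (cball 0 1) x * H (sgn x) \<partial>lborel)"
  unfolding sphere_surface_measure_def
  by (simp add: nn_integral_scale_measure nn_integral_distr, subst nn_integral_density, auto intro!: borel_measurable_indicator borel_closed)

lemma emeasure_ssm_UNIV:
  "emeasure (sphere_surface_measure :: 'a::euclidean_space measure) UNIV =
     ennreal (real DIM('a) * unit_ball_vol DIM('a))"
proof -
  have "emeasure (sphere_surface_measure :: 'a measure) UNIV = (\<integral>\<^sup>+ y. 1 \<partial>(sphere_surface_measure :: 'a measure))"
    by simp
  also have "\<dots> = ennreal (real DIM('a)) * emeasure lborel (cball (0::'a) 1)"
    by (subst nn_integral_ssm) auto
  also have "\<dots> = ennreal (real DIM('a) * unit_ball_vol DIM('a))"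
    by (simp add: emeasure_cball ennreal_mult)
  finally show ?thesis .
qed

lemma finite_measure_ssm: "finite_measure (sphere_surface_measure :: 'a::euclidean_space measure)"
  by (rule finite_measureI) (simp add: emeasure_ssm_UNIV)

lemma AE_ssm_norm: "AE y in (sphere_surface_measure :: 'a::euclidean_space measure). norm y = 1"
proof -
  let ?N = "{y::'a. norm y \<noteq> 1}"
  have [measurable]: "?N \<in> sets borel" by measurable
  have "emeasure (sphere_surface_measure :: 'a measure) ?N = (\<integral>\<^sup>+ y. indicator ?N y \<partial>(sphere_surface_measure :: 'a measure))"
    by simp
  also have "\<dots> = ennreal (real DIM('a)) * (\<integral>\<^sup>+ x. indicator (cball 0 1) x * indicator ?N (sgn x) \<partial>lborel)"
    by (subst nn_integral_ssm) auto
  also have "(\<integral>\<^sup>+ x. indicator (cball 0 1) x * indicator ?N (sgn x) \<partial>lborel) = (\<integral>\<^sup>+ x. (0::ennreal) \<partial>(lborel::'a measure))"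
  proof (rule nn_integral_cong_AE)
    show "AE x in lborel. indicator (cball 0 1) x * indicator ?N (sgn x) = (0::ennreal)"
      using AE_lborel_singleton[of "0::'a"]
      by eventually_elim (auto simp: indicator_def norm_sgn)
  qed
  finally have "emeasure (sphere_surface_measure :: 'a measure) ?N = 0" by simp
  then show ?thesis
    by (intro AE_I[of _ _ ?N]) auto
qed

lemma ball_cball_borel [measurable]:
  "ball (c::'a::metric_space) r \<in> sets borel" "cball c r \<in> sets borel"
  by (auto intro: borel_open borel_closed)

lemma nn_integral_ball_scale:
  fixes H :: "'a::euclidean_space \<Rightarrow> ennreal"
  assumes [measurable]: "H \<in> borel_measurable borel" and b: "b > 0"
  shows "(\<integral>\<^sup>+ x. H (sgn x) * indicator (ball 0 b) x \<partial>lborel) =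
     ennreal (b ^ DIM('a)) * (\<integral>\<^sup>+ x. H (sgn x) * indicator (ball 0 1) x \<partial>lborel)"
proof -
  let ?f = "\<lambda>x::'a. H (sgn x) * indicator (ball 0 b) x"
  have [measurable]: "?f \<in> borel_measurable borel"
    by measurable
  have eq: "(lborel::'a measure) = density (distr lborel borel (\<lambda>x. 0 + b *\<^sub>R x)) (\<lambda>_. \<bar>b\<bar>^DIM('a))"
    using lborel_affine[of b 0] b by simp
  have "(\<integral>\<^sup>+ x. ?f x \<partial>lborel) = (\<integral>\<^sup>+ x. ?f x \<partial>(density (distr lborel borel (\<lambda>x. 0 + b *\<^sub>R x)) (\<lambda>_. \<bar>b\<bar>^DIM('a))))"
    by (rule arg_cong[where f="\<lambda>M. integral\<^sup>N M ?f", OF eq])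
  also have "\<dots> = (\<integral>\<^sup>+ x. ennreal (b ^ DIM('a)) * (H (sgn x) * indicator (ball 0 1) x) \<partial>lborel)"
  proof (subst nn_integral_density, simp, simp, subst nn_integral_distr, simp, simp, intro nn_integral_cong)
    fix x :: 'a
    have "sgn (b *\<^sub>R x) = sgn x" using b by (simp add: sgn_scaleR)
    moreover have "(b *\<^sub>R x \<in> ball 0 b) = (x \<in> ball 0 1)" using b by simp
    ultimately show "ennreal (\<bar>b\<bar> ^ DIM('a)) * ?f (0 + b *\<^sub>R x) = ennreal (b ^ DIM('a)) * (H (sgn x) * indicator (ball 0 1) x)"
      using b by (simp add: indicator_def)
  qed
  also have "\<dots> = ennreal (b ^ DIM('a)) * (\<integral>\<^sup>+ x. H (sgn x) * indicator (ball 0 1) x \<partial>lborel)"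
    by (rule nn_integral_cmult) measurable
  finally show ?thesis .
qed

lemma sphere_null_lborel: "sphere (0::'a::euclidean_space) 1 \<in> null_sets lborel"
  using negligible_sphere[of "0::'a" 1]
  by (auto simp: null_sets_completion_iff negligible_iff_null_sets negligible_convex_frontier)

lemma nn_integral_ball_cball:
  fixes H :: "'a::euclidean_space \<Rightarrow> ennreal"
  shows "(\<integral>\<^sup>+ x. H (sgn x) * indicator (ball 0 1) x \<partial>lborel) =
     (\<integral>\<^sup>+ x. indicator (cball 0 1) x * H (sgn x) \<partial>lborel)"
proof (rule nn_integral_cong_AE)
  show "AE x in lborel. H (sgn x) * indicator (ball 0 1) x = indicator (cball 0 1) x * H (sgn x)"
    using AE_not_in[OF sphere_null_lborel] by eventually_elim (auto simp: indicator_def)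
qed

lemma power_integral_aux:
  assumes b: "b > 0" and d: "d \<ge> 1"
  shows "(\<integral>\<^sup>+ s. ennreal (real d * (-s)^(d-1)) * indicator {-b..0} s \<partial>lborel) = ennreal (b^d)"
proof -
  have "((\<lambda>s. real d * (-s)^(d-1)) has_integral ((\<lambda>s::real. - ((-s)^d)) 0 - (\<lambda>s. - ((-s)^d)) (-b))) {-b..0}"
  proof (rule fundamental_theorem_of_calculus)
    show "-b \<le> (0::real)" using b by simp
    fix x :: real assume "x \<in> {-b..0}"
    have "((\<lambda>s::real. - ((-s)^d)) has_real_derivative (real d * (-x)^(d-1))) (at x within {-b..0})"
      by (auto intro!: derivative_eq_intros)
    then show "((\<lambda>s::real. - ((-s)^d)) has_vector_derivative (real d * (-x)^(d-1))) (at x within {-b..0})"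
      by (simp add: has_real_derivative_iff_has_vector_derivative)
  qed
  moreover have "(\<lambda>s::real. - ((-s)^d)) 0 - (\<lambda>s. - ((-s)^d)) (-b) = b^d"
    using d by simp
  ultimately have I: "((\<lambda>s. real d * (-s)^(d-1)) has_integral b^d) {-b..0}" by (metis (no_types, lifting))
  show ?thesis
    by (rule nn_integral_has_integral_lebesgue'[OF _ I]) auto
qed

lemma polar_nn_integral:
  fixes F :: "real \<Rightarrow> ennreal" and H :: "'a::euclidean_space \<Rightarrow> ennreal"
  assumes [measurable]: "F \<in> borel_measurable borel" "H \<in> borel_measurable borel"
    and fin: "(\<integral>\<^sup>+ y. H y \<partial>sphere_surface_measure) < \<infinity>"
  shows "(\<integral>\<^sup>+ x. F (norm x) * H (sgn x) \<partial>lborel) =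
     (\<integral>\<^sup>+ r. F r * ennreal (r ^ (DIM('a) - 1)) * indicator {0<..} r \<partial>lborel) *
     (\<integral>\<^sup>+ y. H y \<partial>sphere_surface_measure)"
proof -
  define d where "d = DIM('a)"
  have d1: "d \<ge> 1" by (simp add: d_def DIM_positive Suc_leI)
  define c where "c = (\<integral>\<^sup>+ x. indicator (cball 0 1) x * H (sgn x) \<partial>(lborel::'a measure))"
  have Hs: "(\<integral>\<^sup>+ y. H y \<partial>sphere_surface_measure) = ennreal (real d) * c"
    unfolding c_def d_def by (rule nn_integral_ssm) simp
  have cfin: "c < \<infinity>"
  proof -
    have "ennreal (real d) * c < \<infinity>" using fin Hs by simp
    moreover have "ennreal (real d) \<noteq> 0" using d1 by simp
    ultimately show ?thesis
      by (auto simp: ennreal_mult_less_top)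
  qed
  define D where "D = density (lborel::'a measure) (\<lambda>x. H (sgn x))"
  define N where "N = distr D borel (\<lambda>x. - norm x)"
  define g where "g = (\<lambda>s::real. c * ennreal (real d * (-s)^(d-1)) * indicator {..<0} s)"
  have [measurable]: "g \<in> borel_measurable borel" unfolding g_def by measurable
  define N' where "N' = density lborel g"
  have sD [simp, measurable_cong]: "sets D = sets borel" by (simp add: D_def)
  have spD [simp]: "space D = UNIV" by (simp add: D_def)
  have NN': "N = N'"
  proof (rule measure_eqI_lessThan)
    show "sets N = sets borel" "sets N' = sets borel" by (simp_all add: N_def N'_def)
    have key: "emeasure N {a<..} = emeasure N' {a<..} \<and> emeasure N {a<..} < \<infinity>" for a
    proof (cases "a < 0")
      case True
      define b where "b = -a"
      have b: "b > 0" using True by (simp add: b_def)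
      have "emeasure N {a<..} = emeasure D {x. a < - norm x}"
        unfolding N_def by (subst emeasure_distr) (auto simp: vimage_def)
      also have "{x::'a. a < - norm x} = ball 0 b" by (auto simp: b_def)
      also have "emeasure D (ball 0 b) = (\<integral>\<^sup>+ x. H (sgn x) * indicator (ball 0 b) x \<partial>lborel)"
        unfolding D_def by (subst emeasure_density) auto
      also have "\<dots> = ennreal (b ^ d) * c"
        unfolding d_def c_def by (subst nn_integral_ball_scale[OF _ b]) (auto simp: nn_integral_ball_cball)
      finally have 1: "emeasure N {a<..} = ennreal (b ^ d) * c" .
      have "emeasure N' {a<..} = (\<integral>\<^sup>+ s. g s * indicator {a<..} s \<partial>lborel)"
        unfolding N'_def by (subst emeasure_density) auto
      also have "\<dots> = (\<integral>\<^sup>+ s. c * (ennreal (real d * (-s)^(d-1)) * indicator {-b..0} s) \<partial>lborel)"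
      proof (rule nn_integral_cong_AE)
        show "AE s in lborel. g s * indicator {a<..} s = c * (ennreal (real d * (-s)^(d-1)) * indicator {-b..0} s)"
          using AE_lborel_singleton[of a] AE_lborel_singleton[of 0]
          by eventually_elim (auto simp: g_def indicator_def b_def)
      qed
      also have "\<dots> = c * (\<integral>\<^sup>+ s. ennreal (real d * (-s)^(d-1)) * indicator {-b..0} s \<partial>lborel)"
        by (rule nn_integral_cmult) measurable
      also have "\<dots> = c * ennreal (b ^ d)"
        by (simp only: power_integral_aux[OF b d1])
      finally have 2: "emeasure N' {a<..} = c * ennreal (b ^ d)" .
      show ?thesis using 1 2 cfin by (simp add: mult.commute ennreal_mult_less_top)
    next
      case False
      have "emeasure N {a<..} = emeasure D {x. a < - norm x}"
        unfolding N_def by (subst emeasure_distr) (auto simp: vimage_def)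
      also have "{x::'a. a < - norm x} = {}"
      proof -
        have "\<not> a < - norm x" for x :: 'a using False norm_ge_zero[of x] by linarith
        then show ?thesis by auto
      qed
      finally have 1: "emeasure N {a<..} = 0" by simp
      have "emeasure N' {a<..} = (\<integral>\<^sup>+ s. g s * indicator {a<..} s \<partial>lborel)"
        unfolding N'_def by (subst emeasure_density) auto
      also have "\<dots> = (\<integral>\<^sup>+ s. (0::ennreal) \<partial>(lborel::real measure))"
        using False by (intro nn_integral_cong) (auto simp: g_def indicator_def)
      finally have 2: "emeasure N' {a<..} = 0" by simp
      show ?thesis using 1 2 by simp
    qed
    show "emeasure N {a<..} < \<infinity>" for a using key by blast
    show "emeasure N {a<..} = emeasure N' {a<..}" for a using key by blast
  qed
  have "(\<integral>\<^sup>+ x. F (norm x) * H (sgn x) \<partial>lborel) = (\<integral>\<^sup>+ x. F (- (- norm x)) \<partial>D)"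
    unfolding D_def by (subst nn_integral_density) (auto simp: mult.commute)
  also have "\<dots> = (\<integral>\<^sup>+ s. F (- s) \<partial>N)"
    unfolding N_def by (subst nn_integral_distr) auto
  also have "\<dots> = (\<integral>\<^sup>+ s. g s * F (- s) \<partial>lborel)"
    unfolding NN' N'_def by (subst nn_integral_density) auto
  also have "\<dots> = (\<integral>\<^sup>+ r. g (0 + (-1) * r) * F (- (0 + (-1) * r)) \<partial>lborel)"
    by (subst nn_integral_real_affine[of _ "-1" 0]) auto
  also have "\<dots> = (\<integral>\<^sup>+ r. (ennreal (real d) * c) * (F r * ennreal (r ^ (d - 1)) * indicator {0<..} r) \<partial>lborel)"
    by (intro nn_integral_cong) (auto simp: g_def indicator_def ennreal_mult mult_ac)
  also have "\<dots> = (ennreal (real d) * c) * (\<integral>\<^sup>+ r. F r * ennreal (r ^ (d - 1)) * indicator {0<..} r \<partial>lborel)"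
    by (subst nn_integral_cmult) auto
  finally show ?thesis unfolding Hs by (simp add: d_def mult.commute)
qed

lemma gauss1:
  assumes b: "\<beta> > 0"
  shows "(\<integral>\<^sup>+ u. ennreal (exp (- (\<beta>/2) * u\<^sup>2)) \<partial>lborel) = ennreal (sqrt (2*pi/\<beta>))"
proof -
  define s where "s = 1 / sqrt \<beta>"
  have s: "s > 0" using b by (simp add: s_def)
  have ss: "s\<^sup>2 = 1/\<beta>" using b by (simp add: s_def power_divide)
  have eq: "exp (- (\<beta>/2) * u\<^sup>2) = sqrt (2*pi/\<beta>) * normal_density 0 s u" for u
    using b pi_gt_zero unfolding normal_density_def ss
    by (simp add: real_sqrt_divide field_simps)
  have "(\<integral>\<^sup>+ u. ennreal (normal_density 0 s u) \<partial>lborel) = ennreal (\<integral>u. normal_density 0 s u \<partial>lborel)"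
    by (rule nn_integral_eq_integral) (auto intro: integrable_normal_density[OF s] normal_density_nonneg)
  also have "\<dots> = 1" using integral_normal_density[OF s] by simp
  finally have 1: "(\<integral>\<^sup>+ u. ennreal (normal_density 0 s u) \<partial>lborel) = 1" .
  have "(\<integral>\<^sup>+ u. ennreal (exp (- (\<beta>/2) * u\<^sup>2)) \<partial>lborel) =
        (\<integral>\<^sup>+ u. ennreal (sqrt (2*pi/\<beta>)) * ennreal (normal_density 0 s u) \<partial>lborel)"
    by (intro nn_integral_cong, subst eq, rule ennreal_mult) (use b in \<open>auto simp: normal_density_nonneg\<close>)
  also have "\<dots> = ennreal (sqrt (2*pi/\<beta>))"
    by (subst nn_integral_cmult) (auto simp: 1)
  finally show ?thesis .
qed

lemma norm_sum_basis_sq: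
  "(norm (\<Sum>b\<in>Basis. f b *\<^sub>R b :: 'a::euclidean_space))\<^sup>2 = (\<Sum>b\<in>Basis. (f b)\<^sup>2)"
proof -
  let ?x = "\<Sum>b\<in>Basis. f b *\<^sub>R b :: 'a"
  have "(norm ?x)\<^sup>2 = inner ?x ?x" by (rule power2_norm_eq_inner)
  also have "\<dots> = (\<Sum>b\<in>Basis. inner ?x b * inner ?x b)" by (rule euclidean_inner)
  also have "\<dots> = (\<Sum>b\<in>Basis. (f b)\<^sup>2)"
    by (intro sum.cong) (auto simp: power2_eq_square)
  finally show ?thesis .
qed

lemma gaussd:
  fixes c :: "'a::euclidean_space"
  assumes b: "\<beta> > 0"
  shows "(\<integral>\<^sup>+ x. ennreal (exp (- (\<beta>/2) * (norm (x - c))\<^sup>2)) \<partial>lborel) = ennreal (sqrt (2*pi/\<beta>) ^ DIM('a))"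
proof -
  interpret P: product_sigma_finite "\<lambda>_::'a. (lborel::real measure)" by standard
  have "(\<integral>\<^sup>+ x. ennreal (exp (- (\<beta>/2) * (norm (x - c))\<^sup>2)) \<partial>lborel) =
      (\<integral>\<^sup>+ x. ennreal (exp (- (\<beta>/2) * (norm (x - c))\<^sup>2)) \<partial>(distr lborel borel ((+) c)))"
    by (simp add: lborel_distr_plus)
  also have "\<dots> = (\<integral>\<^sup>+ x. ennreal (exp (- (\<beta>/2) * (norm (x::'a))\<^sup>2)) \<partial>lborel)"
    by (subst nn_integral_distr) auto
  also have "\<dots> = (\<integral>\<^sup>+ x. ennreal (exp (- (\<beta>/2) * (norm (x::'a))\<^sup>2)) \<partial>(distr (\<Pi>\<^sub>M b\<in>Basis. lborel) borel (\<lambda>f. \<Sum>b\<in>Basis. f b *\<^sub>R b)))"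
    by (subst lborel_eq) (rule refl)
  also have "\<dots> = (\<integral>\<^sup>+ f. ennreal (exp (- (\<beta>/2) * (norm (\<Sum>b\<in>Basis. f b *\<^sub>R b :: 'a))\<^sup>2)) \<partial>(\<Pi>\<^sub>M b\<in>Basis. lborel))"
    by (subst nn_integral_distr) auto
  also have "\<dots> = (\<integral>\<^sup>+ f. (\<Prod>b\<in>Basis. ennreal (exp (- (\<beta>/2) * (f b)\<^sup>2))) \<partial>(\<Pi>\<^sub>M b\<in>(Basis::'a set). lborel))"
    by (intro nn_integral_cong)
       (simp add: norm_sum_basis_sq sum_distrib_left exp_sum prod_ennreal)
  also have "\<dots> = (\<Prod>b\<in>(Basis::'a set). (\<integral>\<^sup>+ u. ennreal (exp (- (\<beta>/2) * u\<^sup>2)) \<partial>lborel))"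
    by (rule P.product_nn_integral_prod) auto
  also have "\<dots> = ennreal (sqrt (2*pi/\<beta>) ^ DIM('a))"
    by (simp only: gauss1[OF b] prod_constant) (rule ennreal_power, use b in simp)
  finally show ?thesis .
qed

lemma AE_ssm_inner:
  fixes q :: "'a::euclidean_space"
  assumes q: "norm q = 1"
  shows "AE y in sphere_surface_measure. norm y = 1 \<and> inner q y \<le> 1 \<and> -1 \<le> inner q y"
  using AE_ssm_norm
proof eventually_elim
  case (elim y)
  have "\<bar>inner q y\<bar> \<le> norm q * norm y" by (rule Cauchy_Schwarz_ineq2)
  with elim q show ?case by auto
qed

lemma integrable_expT:
  fixes q :: "'a::euclidean_space"
  assumes q: "norm q = 1" and s: "s \<ge> 0"
  shows "integrable sphere_surface_measure (\<lambda>y. exp (- s * (1 - inner q y)))"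
proof -
  interpret finite_measure "sphere_surface_measure :: 'a measure" by (rule finite_measure_ssm)
  show ?thesis
  proof (rule integrable_const_bound[where B=1])
    show "AE y in sphere_surface_measure. norm (exp (- s * (1 - inner q y))) \<le> 1"
      using AE_ssm_inner[OF q]
    proof eventually_elim
      case (elim y)
      then have "- s * (1 - inner q y) \<le> 0" using s by (simp add: mult_nonneg_nonneg)
      then show ?case by simp
    qed
  qed measurable
qed

lemma nn_integral_expT:
  fixes q :: "'a::euclidean_space"
  assumes q: "norm q = 1" and s: "s \<ge> 0"
  shows "(\<integral>\<^sup>+ y. ennreal (exp (- s * (1 - inner q y))) \<partial>sphere_surface_measure) =
      ennreal (\<integral> y. exp (- s * (1 - inner q y)) \<partial>sphere_surface_measure)"
  by (rule nn_integral_eq_integral[OF integrable_expT[OF q s]]) auto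

lemma integral_expT_nonneg:
  "0 \<le> (\<integral> y. exp (- s * (1 - inner q y)) \<partial>(sphere_surface_measure :: 'a::euclidean_space measure))"
  by (rule integral_nonneg_AE) auto

lemma integral_expT_mono:
  fixes q :: "'a::euclidean_space"
  assumes q: "norm q = 1" and s: "0 \<le> s" "s \<le> t"
  shows "(\<integral> y. exp (- t * (1 - inner q y)) \<partial>sphere_surface_measure) \<le>
         (\<integral> y. exp (- s * (1 - inner q y)) \<partial>sphere_surface_measure)"
proof (rule integral_mono_AE)
  show "integrable sphere_surface_measure (\<lambda>y. exp (- t * (1 - inner q y)))"
    using s by (intro integrable_expT[OF q]) auto
  show "integrable sphere_surface_measure (\<lambda>y. exp (- s * (1 - inner q y)))"
    using s by (intro integrable_expT[OF q]) auto
  show "AE y in sphere_surface_measure. exp (- t * (1 - inner q y)) \<le> exp (- s * (1 - inner q y))"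
    using AE_ssm_inner[OF q]
  proof eventually_elim
    case (elim y)
    then have "s * (1 - inner q y) \<le> t * (1 - inner q y)" using s by (intro mult_right_mono) auto
    then show ?case by simp
  qed
qed

lemma norm_diff_q_sq:
  fixes x q :: "'a::euclidean_space"
  assumes q: "norm q = 1" and x: "x \<noteq> 0"
  shows "(norm (x - q))\<^sup>2 = (norm x - 1)\<^sup>2 + 2 * norm x * (1 - inner q (sgn x))"
proof -
  have nx: "norm x > 0" using x by simp
  have "inner q (sgn x) = inner q x / norm x"
    by (simp add: sgn_div_norm inner_scaleR_right divide_inverse mult.commute)
  then have e1: "2 * norm x * (1 - inner q (sgn x)) = 2 * norm x - 2 * inner q x"
    using nx by (simp add: field_simps)
  have qq: "inner q q = 1" using q by (metis power2_norm_eq_inner power_one)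
  have e2: "(norm (x - q))\<^sup>2 = (norm x)\<^sup>2 - 2 * inner q x + 1"
    using qq by (simp add: power2_norm_eq_inner inner_diff_left inner_diff_right inner_commute)
  show ?thesis unfolding e1 e2 by (simp add: power2_eq_square algebra_simps)
qed

lemma inner_sgn_le:
  fixes x q :: "'a::euclidean_space"
  assumes q: "norm q = 1"
  shows "inner q (sgn x) \<le> 1"
proof -
  have "inner q (sgn x) \<le> norm q * norm (sgn x)" by (rule norm_cauchy_schwarz)
  also have "\<dots> \<le> 1" using q by (cases "x = 0") (auto simp: norm_sgn)
  finally show ?thesis .
qed

lemma C0_fin: "(\<integral>\<^sup>+ x. ennreal (exp (- (1/2) * (norm x - 1)\<^sup>2)) \<partial>(lborel :: 'a::euclidean_space measure)) < \<infinity>"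
proof -
  have "(\<integral>\<^sup>+ x. ennreal (exp (- (1/2) * (norm x - 1)\<^sup>2)) \<partial>(lborel :: 'a measure)) \<le>
      (\<integral>\<^sup>+ x. ennreal (exp (1/2)) * ennreal (exp (- ((1/2)/2) * (norm ((x::'a) - 0))\<^sup>2)) \<partial>lborel)"
  proof (rule nn_integral_mono)
    fix x :: 'a
    have "0 \<le> (norm x - 2)\<^sup>2" by simp
    then have "- (1/2) * (norm x - 1)\<^sup>2 \<le> 1/2 + - ((1/2)/2) * (norm (x - 0))\<^sup>2"
      by (simp add: power2_eq_square algebra_simps)
    then have "exp (- (1/2) * (norm x - 1)\<^sup>2) \<le> exp (1/2) * exp (- ((1/2)/2) * (norm (x - 0))\<^sup>2)"
      by (simp add: exp_add[symmetric] del: diff_0_right)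
    then show "ennreal (exp (- (1/2) * (norm x - 1)\<^sup>2)) \<le> ennreal (exp (1/2)) * ennreal (exp (- ((1/2)/2) * (norm (x - 0))\<^sup>2))"
      by (simp add: ennreal_mult'[symmetric] del: diff_0_right)
  qed
  also have "\<dots> = ennreal (exp (1/2)) * (\<integral>\<^sup>+ x. ennreal (exp (- ((1/2)/2) * (norm (x - 0))\<^sup>2)) \<partial>(lborel :: 'a measure))"
    by (rule nn_integral_cmult) measurable
  also have "\<dots> = ennreal (exp (1/2)) * ennreal (sqrt (2*pi/(1/2)) ^ DIM('a))"
    by (subst gaussd) auto
  also have "\<dots> < \<infinity>" by (simp add: ennreal_mult_less_top)
  finally show ?thesis .
qed

context
  fixes q :: "'a::euclidean_space" and \<beta> \<delta> :: real
  assumes q: "norm q = 1" and b: "\<beta> \<ge> 1" and dl: "0 < \<delta>" "\<delta> < 1"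
begin

definition "F1 = (\<lambda>r. ennreal (exp (- (\<beta>/2) * (r - 1)\<^sup>2)) * indicator {1-\<delta>..1+\<delta>} r)"
definition "HH = (\<lambda>s y. ennreal (exp (- s * (1 - inner q y))))"
definition "EE = (\<lambda>x::'a. ennreal (exp (- (\<beta>/2) * (norm x - 1)\<^sup>2)) * indicator {x. \<delta> < \<bar>norm x - 1\<bar>} x)"
definition "GG = (\<lambda>x::'a. ennreal (exp (- (\<beta>/2) * (norm (x - q))\<^sup>2)))"

lemma F1_meas [measurable]: "F1 \<in> borel_measurable borel" unfolding F1_def by measurable
lemma HH_meas [measurable]: "HH s \<in> borel_measurable borel" unfolding HH_def by measurable
lemma EE_meas [measurable]: "EE \<in> borel_measurable borel" unfolding EE_def by measurable
lemma GG_meas [measurable]: "GG \<in> borel_measurable borel" unfolding GG_def by measurable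

lemma lower_pt: "F1 (norm x) * HH (\<beta> * (1 + \<delta>)) (sgn x) \<le> GG x"
proof (cases "norm x \<in> {1-\<delta>..1+\<delta>}")
  case True
  then have x: "x \<noteq> 0" using dl by auto
  define r where "r = norm x"
  define t where "t = 1 - inner q (sgn x)"
  have t: "t \<ge> 0" using inner_sgn_le[OF q, of x] by (simp add: t_def)
  have r: "r \<le> 1 + \<delta>" using True by (simp add: r_def)
  have "\<beta> * r * t \<le> \<beta> * (1 + \<delta>) * t"
    using b t r by (intro mult_right_mono mult_left_mono) auto
  then have "- (\<beta>/2) * (r - 1)\<^sup>2 + - (\<beta> * (1 + \<delta>)) * t \<le> - (\<beta>/2) * ((r - 1)\<^sup>2 + 2 * r * t)"
    by (simp add: algebra_simps)
  then have "exp (- (\<beta>/2) * (r - 1)\<^sup>2) * exp (- (\<beta> * (1 + \<delta>)) * t) \<le> exp (- (\<beta>/2) * (norm (x - q))\<^sup>2)"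
    unfolding norm_diff_q_sq[OF q x] r_def[symmetric] t_def[symmetric] by (simp add: exp_add[symmetric])
  then show ?thesis using True
    by (simp add: F1_def HH_def GG_def r_def t_def ennreal_mult'[symmetric])
qed (simp add: F1_def)

lemma upper_pt: "GG x \<le> F1 (norm x) * HH (\<beta> * (1 - \<delta>)) (sgn x) + EE x"
proof (cases "\<bar>norm x - 1\<bar> \<le> \<delta>")
  case True
  then have x: "x \<noteq> 0" using dl by auto
  define r where "r = norm x"
  define t where "t = 1 - inner q (sgn x)"
  have t: "t \<ge> 0" using inner_sgn_le[OF q, of x] by (simp add: t_def)
  have r: "1 - \<delta> \<le> r" using True by (simp add: r_def abs_le_iff)
  have "\<beta> * (1 - \<delta>) * t \<le> \<beta> * r * t"
    using b t r by (intro mult_right_mono mult_left_mono) auto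
  then have "- (\<beta>/2) * ((r - 1)\<^sup>2 + 2 * r * t) \<le> - (\<beta>/2) * (r - 1)\<^sup>2 + - (\<beta> * (1 - \<delta>)) * t"
    by (simp add: algebra_simps)
  then have "exp (- (\<beta>/2) * (norm (x - q))\<^sup>2) \<le> exp (- (\<beta>/2) * (r - 1)\<^sup>2) * exp (- (\<beta> * (1 - \<delta>)) * t)"
    unfolding norm_diff_q_sq[OF q x] r_def[symmetric] t_def[symmetric] by (simp add: exp_add[symmetric])
  moreover have "norm x \<in> {1-\<delta>..1+\<delta>}" using True by (auto simp: abs_le_iff)
  ultimately have "GG x \<le> F1 (norm x) * HH (\<beta> * (1 - \<delta>)) (sgn x)"
    by (simp add: F1_def HH_def GG_def r_def t_def ennreal_mult'[symmetric])
  then show ?thesis by (simp add: add_increasing2)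
next
  case False
  have "\<bar>norm x - norm q\<bar> \<le> norm (x - q)" by (rule norm_triangle_ineq3)
  then have "(norm x - 1)\<^sup>2 \<le> (norm (x - q))\<^sup>2" using q
    by (metis abs_ge_zero power2_abs power_mono)
  then have "GG x \<le> EE x" using False b
    by (simp add: GG_def EE_def)
  then show ?thesis by (simp add: add_increasing)
qed


abbreviation "AA s \<equiv> (\<integral> y. exp (- s * (1 - inner q y)) \<partial>(sphere_surface_measure :: 'a measure))"
abbreviation "PP \<equiv> (\<integral>\<^sup>+ u. ennreal (exp (- (\<beta>/2) * u\<^sup>2)) * indicator {-\<delta>..\<delta>} u \<partial>lborel)"

lemma HH_int: "s \<ge> 0 \<Longrightarrow> (\<integral>\<^sup>+ y. HH s y \<partial>sphere_surface_measure) = ennreal (AA s)"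
  unfolding HH_def by (rule nn_integral_expT[OF q])

lemma I2_lower: "ennreal ((1-\<delta>)^(DIM('a)-1)) * integral\<^sup>N lborel F1 \<le>
    (\<integral>\<^sup>+ r. F1 r * ennreal (r^(DIM('a)-1)) * indicator {0<..} r \<partial>lborel)"
proof -
  have "ennreal ((1-\<delta>)^(DIM('a)-1)) * integral\<^sup>N lborel F1 = (\<integral>\<^sup>+ r. ennreal ((1-\<delta>)^(DIM('a)-1)) * F1 r \<partial>lborel)"
    by (rule nn_integral_cmult[symmetric]) measurable
  also have "\<dots> \<le> (\<integral>\<^sup>+ r. F1 r * ennreal (r^(DIM('a)-1)) * indicator {0<..} r \<partial>lborel)"
  proof (rule nn_integral_mono)
    fix r :: real
    show "ennreal ((1-\<delta>)^(DIM('a)-1)) * F1 r \<le> F1 r * ennreal (r^(DIM('a)-1)) * indicator {0<..} r"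
    proof (cases "r \<in> {1-\<delta>..1+\<delta>}")
      case True
      then have "r > 0" "(1-\<delta>)^(DIM('a)-1) \<le> r^(DIM('a)-1)" using dl by (auto intro!: power_mono)
      then show ?thesis using True
        by (auto simp: F1_def mult.commute intro!: mult_right_mono ennreal_leI)
    qed (simp add: F1_def)
  qed
  finally show ?thesis .
qed

lemma I2_upper: "(\<integral>\<^sup>+ r. F1 r * ennreal (r^(DIM('a)-1)) * indicator {0<..} r \<partial>lborel) \<le>
    ennreal ((1+\<delta>)^(DIM('a)-1)) * integral\<^sup>N lborel F1"
proof -
  have "(\<integral>\<^sup>+ r. F1 r * ennreal (r^(DIM('a)-1)) * indicator {0<..} r \<partial>lborel) \<le>
       (\<integral>\<^sup>+ r. ennreal ((1+\<delta>)^(DIM('a)-1)) * F1 r \<partial>lborel)"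
  proof (rule nn_integral_mono)
    fix r :: real
    show "F1 r * ennreal (r^(DIM('a)-1)) * indicator {0<..} r \<le> ennreal ((1+\<delta>)^(DIM('a)-1)) * F1 r"
    proof (cases "r \<in> {1-\<delta>..1+\<delta>}")
      case True
      then have "r > 0" "r^(DIM('a)-1) \<le> (1+\<delta>)^(DIM('a)-1)" using dl by (auto intro!: power_mono)
      then show ?thesis using True
        by (auto simp: F1_def mult.commute intro!: mult_right_mono ennreal_leI)
    qed (simp add: F1_def)
  qed
  also have "\<dots> = ennreal ((1+\<delta>)^(DIM('a)-1)) * integral\<^sup>N lborel F1"
    by (rule nn_integral_cmult) measurable
  finally show ?thesis .
qed

lemma I3: "integral\<^sup>N lborel F1 = PP"
proof -
  have "integral\<^sup>N lborel F1 = ennreal \<bar>1\<bar> * (\<integral>\<^sup>+ u. F1 (1 + 1 * u) \<partial>lborel)"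
    by (rule nn_integral_real_affine) auto
  also have "\<dots> = PP"
    by (simp add: F1_def indicator_def)
  finally show ?thesis .
qed

lemma I4: "PP \<le> ennreal (sqrt (2*pi/\<beta>))"
proof -
  have "PP \<le> (\<integral>\<^sup>+ u. ennreal (exp (- (\<beta>/2) * u\<^sup>2)) \<partial>lborel)"
    by (intro nn_integral_mono) (auto simp: indicator_def)
  also have "\<dots> = ennreal (sqrt (2*pi/\<beta>))" using b by (intro gauss1) auto
  finally show ?thesis .
qed

lemma I5: "ennreal (sqrt (2*pi/\<beta>)) \<le> PP + ennreal (exp (- (\<beta>-1) * \<delta>\<^sup>2 / 2) * sqrt (2*pi))"
proof -
  have "ennreal (sqrt (2*pi/\<beta>)) = (\<integral>\<^sup>+ u. ennreal (exp (- (\<beta>/2) * u\<^sup>2)) \<partial>lborel)"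
    using b by (intro gauss1[symmetric]) auto
  also have "\<dots> \<le> (\<integral>\<^sup>+ u. ennreal (exp (- (\<beta>/2) * u\<^sup>2)) * indicator {-\<delta>..\<delta>} u +
        ennreal (exp (- (\<beta>-1) * \<delta>\<^sup>2 / 2)) * ennreal (exp (- (1/2) * u\<^sup>2)) \<partial>lborel)"
  proof (rule nn_integral_mono)
    fix u :: real
    show "ennreal (exp (- (\<beta>/2) * u\<^sup>2)) \<le> ennreal (exp (- (\<beta>/2) * u\<^sup>2)) * indicator {-\<delta>..\<delta>} u +
        ennreal (exp (- (\<beta>-1) * \<delta>\<^sup>2 / 2)) * ennreal (exp (- (1/2) * u\<^sup>2))"
    proof (cases "u \<in> {-\<delta>..\<delta>}")
      case True then show ?thesis by simp
    next
      case False
      then have "\<delta>\<^sup>2 \<le> u\<^sup>2" using dl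
        by (metis abs_le_iff abs_of_pos atLeastAtMost_iff less_le_not_le linorder_linear minus_le_iff power2_abs power_mono)
      then have "(\<beta>-1) * \<delta>\<^sup>2 \<le> (\<beta>-1) * u\<^sup>2" using b by (intro mult_left_mono) auto
      then have "- (\<beta>/2) * u\<^sup>2 \<le> - (\<beta>-1) * \<delta>\<^sup>2 / 2 + - (1/2) * u\<^sup>2"
        by (simp add: algebra_simps)
      then have "exp (- (\<beta>/2) * u\<^sup>2) \<le> exp (- (\<beta>-1) * \<delta>\<^sup>2 / 2) * exp (- (1/2) * u\<^sup>2)"
        by (simp add: exp_add[symmetric])
      then show ?thesis using False by (simp add: ennreal_mult'[symmetric])
    qed
  qed
  also have "\<dots> = PP + ennreal (exp (- (\<beta>-1) * \<delta>\<^sup>2 / 2)) * (\<integral>\<^sup>+ u. ennreal (exp (- (1/2) * u\<^sup>2)) \<partial>lborel)"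
    by (subst nn_integral_add) (auto simp: nn_integral_cmult)
  also have "(\<integral>\<^sup>+ u. ennreal (exp (- (1/2) * u\<^sup>2)) \<partial>lborel) = ennreal (sqrt (2*pi))"
    using gauss1[of 1] by simp
  finally show ?thesis by (simp add: ennreal_mult'[symmetric])
qed

lemma I6: "integral\<^sup>N lborel EE \<le> ennreal (exp (- (\<beta>-1) * \<delta>\<^sup>2 / 2)) * (\<integral>\<^sup>+ x. ennreal (exp (- (1/2) * (norm x - 1)\<^sup>2)) \<partial>(lborel :: 'a measure))"
proof -
  have "integral\<^sup>N lborel EE \<le> (\<integral>\<^sup>+ x. ennreal (exp (- (\<beta>-1) * \<delta>\<^sup>2 / 2)) * ennreal (exp (- (1/2) * (norm (x::'a) - 1)\<^sup>2)) \<partial>lborel)"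
  proof (rule nn_integral_mono)
    fix x :: 'a
    show "EE x \<le> ennreal (exp (- (\<beta>-1) * \<delta>\<^sup>2 / 2)) * ennreal (exp (- (1/2) * (norm x - 1)\<^sup>2))"
    proof (cases "\<delta> < \<bar>norm x - 1\<bar>")
      case True
      then have "\<delta>\<^sup>2 \<le> (norm x - 1)\<^sup>2" using dl
        by (metis abs_ge_zero less_imp_le order.strict_implies_not_eq power2_abs power_mono abs_of_pos)
      then have "(\<beta>-1) * \<delta>\<^sup>2 \<le> (\<beta>-1) * (norm x - 1)\<^sup>2" using b by (intro mult_left_mono) auto
      then have "- (\<beta>/2) * (norm x - 1)\<^sup>2 \<le> - (\<beta>-1) * \<delta>\<^sup>2 / 2 + - (1/2) * (norm x - 1)\<^sup>2"
        by (simp add: algebra_simps)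
      then have "exp (- (\<beta>/2) * (norm x - 1)\<^sup>2) \<le> exp (- (\<beta>-1) * \<delta>\<^sup>2 / 2) * exp (- (1/2) * (norm x - 1)\<^sup>2)"
        by (simp add: exp_add[symmetric])
      then show ?thesis using True by (simp add: EE_def ennreal_mult'[symmetric])
    qed (simp add: EE_def)
  qed
  also have "\<dots> = ennreal (exp (- (\<beta>-1) * \<delta>\<^sup>2 / 2)) * (\<integral>\<^sup>+ x. ennreal (exp (- (1/2) * (norm x - 1)\<^sup>2)) \<partial>(lborel :: 'a measure))"
    by (rule nn_integral_cmult) measurable
  finally show ?thesis .
qed


lemma sandwich_real:
  defines "C \<equiv> enn2real (\<integral>\<^sup>+ x. ennreal (exp (- (1/2) * (norm x - 1)\<^sup>2)) \<partial>(lborel :: 'a measure))"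
  shows "(1-\<delta>)^(DIM('a)-1) * enn2real PP * AA (\<beta> * (1 + \<delta>)) \<le> sqrt (2*pi/\<beta>) ^ DIM('a)"
    and "sqrt (2*pi/\<beta>) \<le> enn2real PP + exp (- (\<beta>-1) * \<delta>\<^sup>2 / 2) * sqrt (2*pi)"
    and "sqrt (2*pi/\<beta>) ^ DIM('a) \<le> (1+\<delta>)^(DIM('a)-1) * sqrt (2*pi/\<beta>) * AA (\<beta> * (1 - \<delta>)) +
           exp (- (\<beta>-1) * \<delta>\<^sup>2 / 2) * C"
proof -
  have bp: "\<beta> > 0" using b by simp
  have PPfin: "PP < \<infinity>" using I4 by (simp add: le_less_trans)
  have PPe: "PP = ennreal (enn2real PP)" using PPfin by simp
  have C0e: "(\<integral>\<^sup>+ x. ennreal (exp (- (1/2) * (norm x - 1)\<^sup>2)) \<partial>(lborel :: 'a measure)) = ennreal C"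
  proof -
    have "(\<integral>\<^sup>+ x. ennreal (exp (- (1/2) * (norm x - 1)\<^sup>2)) \<partial>(lborel :: 'a measure)) < \<infinity>"
      by (rule C0_fin)
    then show ?thesis unfolding C_def by simp
  qed
  have Ap: "AA (\<beta> * (1 + \<delta>)) \<ge> 0" "AA (\<beta> * (1 - \<delta>)) \<ge> 0" by (rule integral_expT_nonneg)+
  have s1: "\<beta> * (1 + \<delta>) \<ge> 0" "\<beta> * (1 - \<delta>) \<ge> 0" using bp dl by auto
  have fin1: "(\<integral>\<^sup>+ y. HH s y \<partial>sphere_surface_measure) < \<infinity>" if "s \<ge> 0" for s
    using HH_int[OF that] by simp
  have polar: "(\<integral>\<^sup>+ x. F1 (norm x) * HH s (sgn x) \<partial>lborel) =
     (\<integral>\<^sup>+ r. F1 r * ennreal (r ^ (DIM('a) - 1)) * indicator {0<..} r \<partial>lborel) * ennreal (AA s)"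
    if "s \<ge> 0" for s
    using polar_nn_integral[of F1 "HH s", OF _ _ fin1[OF that]] HH_int[OF that] by simp
  have GGi: "integral\<^sup>N lborel GG = ennreal (sqrt (2*pi/\<beta>) ^ DIM('a))"
    unfolding GG_def using gaussd[OF bp, of q] by simp
  have "ennreal ((1-\<delta>)^(DIM('a)-1)) * PP * ennreal (AA (\<beta> * (1 + \<delta>))) \<le>
        (\<integral>\<^sup>+ r. F1 r * ennreal (r ^ (DIM('a) - 1)) * indicator {0<..} r \<partial>lborel) * ennreal (AA (\<beta> * (1 + \<delta>)))"
    using I2_lower unfolding I3 by (intro mult_right_mono) auto
  also have "\<dots> = (\<integral>\<^sup>+ x. F1 (norm x) * HH (\<beta> * (1 + \<delta>)) (sgn x) \<partial>lborel)"
    using polar[OF s1(1)] by simp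
  also have "\<dots> \<le> integral\<^sup>N lborel GG"
    by (intro nn_integral_mono lower_pt)
  finally have "ennreal ((1-\<delta>)^(DIM('a)-1) * enn2real PP * AA (\<beta> * (1 + \<delta>))) \<le> ennreal (sqrt (2*pi/\<beta>) ^ DIM('a))"
    unfolding GGi using Ap dl by (subst (asm) PPe) (simp add: ennreal_mult')
  then show "(1-\<delta>)^(DIM('a)-1) * enn2real PP * AA (\<beta> * (1 + \<delta>)) \<le> sqrt (2*pi/\<beta>) ^ DIM('a)"
    by (subst (asm) ennreal_le_iff) (use bp in auto)
  have PPe2: "ennreal (enn2real PP) = PP" using PPfin by simp
  have "ennreal (enn2real PP + exp (- (\<beta>-1) * \<delta>\<^sup>2 / 2) * sqrt (2*pi)) =
        ennreal (enn2real PP) + ennreal (exp (- (\<beta>-1) * \<delta>\<^sup>2 / 2) * sqrt (2*pi))"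
    by (rule ennreal_plus) auto
  then have "ennreal (sqrt (2*pi/\<beta>)) \<le> ennreal (enn2real PP + exp (- (\<beta>-1) * \<delta>\<^sup>2 / 2) * sqrt (2*pi))"
    using I5 unfolding PPe2 by simp
  then show "sqrt (2*pi/\<beta>) \<le> enn2real PP + exp (- (\<beta>-1) * \<delta>\<^sup>2 / 2) * sqrt (2*pi)"
    by (subst (asm) ennreal_le_iff) auto
  have "ennreal (sqrt (2*pi/\<beta>) ^ DIM('a)) = integral\<^sup>N lborel GG" using GGi by simp
  also have "\<dots> \<le> (\<integral>\<^sup>+ x. F1 (norm x) * HH (\<beta> * (1 - \<delta>)) (sgn x) + EE x \<partial>lborel)"
    by (intro nn_integral_mono upper_pt)
  also have "\<dots> = (\<integral>\<^sup>+ x. F1 (norm x) * HH (\<beta> * (1 - \<delta>)) (sgn x) \<partial>lborel) + integral\<^sup>N lborel EE"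
    by (rule nn_integral_add) measurable
  also have "\<dots> \<le> ennreal ((1+\<delta>)^(DIM('a)-1)) * PP * ennreal (AA (\<beta> * (1 - \<delta>))) +
       ennreal (exp (- (\<beta>-1) * \<delta>\<^sup>2 / 2)) * ennreal C"
    unfolding polar[OF s1(2)] C0e[symmetric]
    using I2_upper I6 unfolding I3 by (intro add_mono mult_right_mono) auto
  also have "\<dots> \<le> ennreal ((1+\<delta>)^(DIM('a)-1)) * ennreal (sqrt (2*pi/\<beta>)) * ennreal (AA (\<beta> * (1 - \<delta>))) +
       ennreal (exp (- (\<beta>-1) * \<delta>\<^sup>2 / 2)) * ennreal C"
    using I4 by (intro add_mono mult_right_mono mult_left_mono) auto
  also have "\<dots> = ennreal ((1+\<delta>)^(DIM('a)-1) * sqrt (2*pi/\<beta>) * AA (\<beta> * (1 - \<delta>))) +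
           ennreal (exp (- (\<beta>-1) * \<delta>\<^sup>2 / 2) * C)"
    using Ap dl bp by (simp only: ennreal_mult'[symmetric] ennreal_mult[symmetric] mult_nonneg_nonneg
        real_sqrt_ge_zero zero_le_power exp_ge_zero) (auto intro!: arg_cong2[where f="(+)"] simp: ennreal_mult)
  also have "\<dots> = ennreal ((1+\<delta>)^(DIM('a)-1) * sqrt (2*pi/\<beta>) * AA (\<beta> * (1 - \<delta>)) +
           exp (- (\<beta>-1) * \<delta>\<^sup>2 / 2) * C)"
    using Ap dl bp by (intro ennreal_plus[symmetric]) (auto simp: C_def)
  finally show "sqrt (2*pi/\<beta>) ^ DIM('a) \<le> (1+\<delta>)^(DIM('a)-1) * sqrt (2*pi/\<beta>) * AA (\<beta> * (1 - \<delta>)) +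
           exp (- (\<beta>-1) * \<delta>\<^sup>2 / 2) * C"
    by (subst (asm) ennreal_le_iff) (use Ap dl bp in \<open>auto simp: C_def intro!: add_nonneg_nonneg mult_nonneg_nonneg\<close>)
qed

end

definition Aq :: "'a::euclidean_space \<Rightarrow> real \<Rightarrow> real" where
  "Aq q s = (\<integral> y. exp (- s * (1 - inner q y)) \<partial>sphere_surface_measure)"

lemma sqrt_pow_powr: "x > 0 \<Longrightarrow> sqrt x ^ n = x powr (real n / 2)"
  by (simp add: powr_half_sqrt_powr powr_realpow real_sqrt_power)

lemma key_id:
  assumes b: "\<beta> > 0" and w: "w > 0"
  shows "sqrt \<beta> * sqrt (w/\<beta>) ^ d = sqrt w * w powr ((real d - 1)/2) / \<beta> powr ((real d - 1)/2)"
proof -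
  have "sqrt \<beta> * sqrt (w/\<beta>) ^ d = \<beta> powr (1/2) * ((w/\<beta>) powr (real d / 2))"
    using b w by (simp add: sqrt_pow_powr powr_half_sqrt)
  also have "\<dots> = \<beta> powr (1/2) * (w powr (real d / 2) / \<beta> powr (real d / 2))"
    using b w by (simp add: powr_divide)
  also have "w powr (real d / 2) = w powr (1/2) * w powr ((real d - 1)/2)"
    by (simp add: powr_add[symmetric] diff_divide_distrib)
  also have "\<beta> powr (real d / 2) = \<beta> powr (1/2) * \<beta> powr ((real d - 1)/2)"
    by (simp add: powr_add[symmetric] diff_divide_distrib)
  finally show ?thesis using b w by (simp add: powr_half_sqrt field_simps)
qed

lemma squeeze_at_top:
  fixes a u l :: "real \<Rightarrow> real"
  assumes up: "\<And>\<delta>. 0 < \<delta> \<Longrightarrow> \<delta> < 1/2 \<Longrightarrow> eventually (\<lambda>s. a s \<le> u \<delta>) at_top"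
    and lo: "\<And>\<delta>. 0 < \<delta> \<Longrightarrow> \<delta> < 1/2 \<Longrightarrow> eventually (\<lambda>s. l \<delta> \<le> a s) at_top"
    and ul: "(u \<longlongrightarrow> L) (at_right 0)" "(l \<longlongrightarrow> L) (at_right 0)"
  shows "(a \<longlongrightarrow> L) at_top"
proof (rule tendstoI)
  fix e :: real assume e: "e > 0"
  have ev: "eventually (\<lambda>\<delta>. 0 < \<delta> \<and> \<delta> < 1/2) (at_right (0::real))"
    unfolding eventually_at_right_field by (intro exI[of _ "1/2"]) auto
  have "eventually (\<lambda>\<delta>. dist (u \<delta>) L < e \<and> dist (l \<delta>) L < e \<and> 0 < \<delta> \<and> \<delta> < 1/2) (at_right (0::real))"
    using tendstoD[OF ul(1) e] tendstoD[OF ul(2) e] ev by eventually_elim auto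
  then obtain \<delta> where \<delta>: "dist (u \<delta>) L < e" "dist (l \<delta>) L < e" "0 < \<delta>" "\<delta> < 1/2"
    using eventually_happens[of _ "at_right (0::real)"] trivial_limit_at_right_real by blast
  show "eventually (\<lambda>s. dist (a s) L < e) at_top"
    using up[OF \<delta>(3,4)] lo[OF \<delta>(3,4)]
  proof eventually_elim
    case (elim s)
    then show ?case using \<delta>(1,2) by (auto simp: dist_real_def abs_less_iff)
  qed
qed

lemma upper_alg:
  fixes \<beta> \<delta> P A w k :: real and d :: nat
  assumes b: "\<beta> \<ge> 1" and dl: "0 < \<delta>" "\<delta> < 1" and P: "P \<ge> 0" and A: "A \<ge> 0" and w: "w > 0"
    and k: "k = (real d - 1)/2" and d1: "d \<ge> 1"
    and h1: "(1-\<delta>)^(d-1) * P * A \<le> sqrt (w/\<beta>) ^ d"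
    and h2: "sqrt (w/\<beta>) \<le> P + E * sqrt w"
    and h3: "sqrt \<beta> * E \<le> \<delta>"
  shows "(\<beta> * (1 + \<delta>)) powr k * A \<le> (1 + \<delta>) powr k * w powr k / (1-\<delta>)^d"
proof -
  have bp: "\<beta> > 0" using b by simp
  have sb: "sqrt \<beta> * sqrt (w/\<beta>) = sqrt w" using bp w by (simp add: real_sqrt_mult[symmetric])
  have "sqrt w \<le> sqrt \<beta> * P + (sqrt \<beta> * E) * sqrt w"
    using mult_left_mono[OF h2, of "sqrt \<beta>"] sb bp by (simp add: algebra_simps)
  also have "\<dots> \<le> sqrt \<beta> * P + \<delta> * sqrt w"
    using h3 w by (intro add_left_mono mult_right_mono) auto
  finally have hP: "(1-\<delta>) * sqrt w \<le> sqrt \<beta> * P" by (simp add: algebra_simps)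
  have "(1-\<delta>)^(d-1) * ((1-\<delta>) * sqrt w) * A \<le> (1-\<delta>)^(d-1) * (sqrt \<beta> * P) * A"
    using hP dl A by (intro mult_right_mono mult_left_mono) auto
  also have "\<dots> = sqrt \<beta> * ((1-\<delta>)^(d-1) * P * A)" by (simp add: algebra_simps)
  also have "\<dots> \<le> sqrt \<beta> * sqrt (w/\<beta>) ^ d" using h1 bp by (intro mult_left_mono) auto
  also have "\<dots> = sqrt w * w powr k / \<beta> powr k" unfolding k by (rule key_id[OF bp w])
  finally have "(1-\<delta>)^(d-1) * ((1-\<delta>) * sqrt w) * A \<le> sqrt w * w powr k / \<beta> powr k" .
  then have "sqrt w * ((1-\<delta>)^(d-1) * (1-\<delta>) * A) \<le> sqrt w * (w powr k / \<beta> powr k)"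
    by (simp add: algebra_simps)
  then have "(1-\<delta>)^(d-1) * (1-\<delta>) * A \<le> w powr k / \<beta> powr k"
    using w by (subst (asm) mult_le_cancel_left_pos) auto
  moreover have "(1-\<delta>)^(d-1) * (1-\<delta>) = (1-\<delta>)^d" using d1 by (cases d) auto
  ultimately have "(1-\<delta>)^d * A \<le> w powr k / \<beta> powr k" by simp
  then have "\<beta> powr k * ((1-\<delta>)^d * A) \<le> w powr k"
    using bp by (simp add: pos_le_divide_eq mult.commute)
  then have "\<beta> powr k * A \<le> w powr k / (1-\<delta>)^d"
    using dl by (simp add: pos_le_divide_eq algebra_simps)
  then have "(1 + \<delta>) powr k * (\<beta> powr k * A) \<le> (1 + \<delta>) powr k * (w powr k / (1-\<delta>)^d)"
    by (intro mult_left_mono) auto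
  moreover have "(\<beta> * (1 + \<delta>)) powr k = \<beta> powr k * (1 + \<delta>) powr k"
    using bp dl by (simp add: powr_mult)
  ultimately show ?thesis by (simp add: algebra_simps)
qed


lemma lower_alg:
  fixes \<beta> \<delta> A w k T :: real and d :: nat
  assumes b: "\<beta> \<ge> 1" and dl: "0 < \<delta>" "\<delta> < 1" and A: "A \<ge> 0" and w: "w > 0"
    and k: "k = (real d - 1)/2"
    and h1: "sqrt (w/\<beta>) ^ d \<le> (1+\<delta>)^(d-1) * sqrt (w/\<beta>) * A + T"
    and h2: "\<beta> powr k * sqrt \<beta> * T \<le> \<delta>"
  shows "(1-\<delta>) powr k * (w powr k * sqrt w - \<delta>) / ((1+\<delta>)^(d-1) * sqrt w) \<le> (\<beta> * (1 - \<delta>)) powr k * A"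
proof -
  have bp: "\<beta> > 0" using b by simp
  define e where "e = \<beta> powr k"
  have e: "e > 0" using bp by (simp add: e_def)
  have sb: "sqrt \<beta> * sqrt (w/\<beta>) = sqrt w" using bp w by (simp add: real_sqrt_mult[symmetric])
  have kid: "sqrt \<beta> * sqrt (w/\<beta>) ^ d = sqrt w * w powr k / e"
    unfolding k e_def by (rule key_id[OF bp w])
  have "e * (sqrt \<beta> * sqrt (w/\<beta>) ^ d) \<le> e * (sqrt \<beta> * ((1+\<delta>)^(d-1) * sqrt (w/\<beta>) * A + T))"
    using h1 e bp by (intro mult_left_mono) auto
  moreover have "e * (sqrt \<beta> * ((1+\<delta>)^(d-1) * sqrt (w/\<beta>) * A + T)) =
      (1+\<delta>)^(d-1) * (sqrt \<beta> * sqrt (w/\<beta>)) * (e * A) + e * sqrt \<beta> * T"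
    by (simp add: algebra_simps)
  ultimately have "sqrt w * w powr k \<le> (1+\<delta>)^(d-1) * sqrt w * (e * A) + e * sqrt \<beta> * T"
    unfolding kid sb using e by simp
  also have "\<dots> \<le> (1+\<delta>)^(d-1) * sqrt w * (e * A) + \<delta>"
    using h2 by (simp add: e_def)
  finally have "w powr k * sqrt w - \<delta> \<le> ((1+\<delta>)^(d-1) * sqrt w) * (e * A)"
    by (simp add: algebra_simps)
  then have "(w powr k * sqrt w - \<delta>) / ((1+\<delta>)^(d-1) * sqrt w) \<le> e * A"
    using w dl by (subst pos_divide_le_eq) (auto simp: mult.commute)
  then have "(1-\<delta>) powr k * ((w powr k * sqrt w - \<delta>) / ((1+\<delta>)^(d-1) * sqrt w)) \<le> (1-\<delta>) powr k * (e * A)"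
    by (intro mult_left_mono) auto
  moreover have "(\<beta> * (1 - \<delta>)) powr k = e * (1 - \<delta>) powr k"
    using bp dl by (simp add: powr_mult e_def)
  ultimately show ?thesis by (simp add: algebra_simps)
qed


lemma Aq_nonneg: "Aq q s \<ge> 0"
  unfolding Aq_def by (rule integral_expT_nonneg)

lemma asymp_A:
  fixes q :: "'a::euclidean_space"
  assumes q: "norm q = 1"
  defines "k \<equiv> (real DIM('a) - 1) / 2"
  shows "((\<lambda>s. s powr k * Aq q s) \<longlongrightarrow> (2*pi) powr k) at_top"
proof -
  define d where "d = DIM('a)"
  define w where "w = 2 * pi"
  define C where "C = enn2real (\<integral>\<^sup>+ x. ennreal (exp (- (1/2) * (norm x - 1)\<^sup>2)) \<partial>(lborel :: 'a measure))"
  have w: "w > 0" by (simp add: w_def)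
  have d1: "d \<ge> 1" by (simp add: d_def DIM_positive Suc_leI)
  have kd: "k = (real d - 1) / 2" by (simp add: k_def d_def)
  have C: "C \<ge> 0" by (simp add: C_def)
  have SW: "\<exists>P\<ge>0. (1-\<delta>)^(d-1) * P * Aq q (\<beta> * (1 + \<delta>)) \<le> sqrt (w/\<beta>) ^ d \<and>
                 sqrt (w/\<beta>) \<le> P + exp (- (\<beta>-1) * \<delta>\<^sup>2 / 2) * sqrt w"
    if "1 \<le> \<beta>" "0 < \<delta>" "\<delta> < 1" for \<beta> \<delta>
    using sandwich_real(1,2)[OF q that] unfolding Aq_def d_def w_def
    by (intro exI[of _ "enn2real (\<integral>\<^sup>+ u. ennreal (exp (- (\<beta>/2) * u\<^sup>2)) * indicator {-\<delta>..\<delta>} u \<partial>lborel)"]) auto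
  have SW3: "sqrt (w/\<beta>) ^ d \<le> (1+\<delta>)^(d-1) * sqrt (w/\<beta>) * Aq q (\<beta> * (1 - \<delta>)) +
           exp (- (\<beta>-1) * \<delta>\<^sup>2 / 2) * C"
    if "1 \<le> \<beta>" "0 < \<delta>" "\<delta> < 1" for \<beta> \<delta>
    using sandwich_real(3)[OF q that] unfolding Aq_def d_def w_def C_def by simp
  show ?thesis
  proof (rule squeeze_at_top[where u = "\<lambda>\<delta>. (1+\<delta>) powr k * w powr k / (1-\<delta>)^d"
        and l = "\<lambda>\<delta>. (1-\<delta>) powr k * (w powr k * sqrt w - \<delta>) / ((1+\<delta>)^(d-1) * sqrt w)"])
    fix \<delta> :: real assume \<delta>: "0 < \<delta>" "\<delta> < 1/2"
    have lim: "((\<lambda>\<beta>. sqrt \<beta> * exp (- (\<beta>-1) * \<delta>\<^sup>2 / 2)) \<longlongrightarrow> 0) at_top"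
      using \<delta> by real_asymp
    have "eventually (\<lambda>\<beta>. sqrt \<beta> * exp (- (\<beta>-1) * \<delta>\<^sup>2 / 2) < \<delta>) at_top"
      by (rule order_tendstoD(2)[OF lim \<delta>(1)])
    moreover have "eventually (\<lambda>\<beta>::real. 1 \<le> \<beta>) at_top" by (rule eventually_ge_at_top)
    ultimately have "eventually (\<lambda>\<beta>. 1 \<le> \<beta> \<and> sqrt \<beta> * exp (- (\<beta>-1) * \<delta>\<^sup>2 / 2) < \<delta>) at_top"
      by eventually_elim auto
    then obtain B where B: "\<And>\<beta>. \<beta> \<ge> B \<Longrightarrow> 1 \<le> \<beta> \<and> sqrt \<beta> * exp (- (\<beta>-1) * \<delta>\<^sup>2 / 2) < \<delta>"
      unfolding eventually_at_top_linorder by blast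
    show "eventually (\<lambda>s. s powr k * Aq q s \<le> (1+\<delta>) powr k * w powr k / (1-\<delta>)^d) at_top"
      unfolding eventually_at_top_linorder
    proof (intro exI[of _ "B * (1 + \<delta>)"] allI impI)
      fix s assume s: "s \<ge> B * (1 + \<delta>)"
      define \<beta> where "\<beta> = s / (1 + \<delta>)"
      have sb: "s = \<beta> * (1 + \<delta>)" using \<delta> by (simp add: \<beta>_def)
      have "\<beta> \<ge> B" using s \<delta> by (simp add: \<beta>_def pos_le_divide_eq)
      note Bb = B[OF this]
      obtain P where P: "P \<ge> 0" "(1-\<delta>)^(d-1) * P * Aq q (\<beta> * (1 + \<delta>)) \<le> sqrt (w/\<beta>) ^ d"
          "sqrt (w/\<beta>) \<le> P + exp (- (\<beta>-1) * \<delta>\<^sup>2 / 2) * sqrt w"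
        using SW[of \<beta> \<delta>] Bb \<delta> by auto
      show "s powr k * Aq q s \<le> (1+\<delta>) powr k * w powr k / (1-\<delta>)^d"
        unfolding sb
        by (rule upper_alg[OF _ _ _ P(1) Aq_nonneg w kd d1 P(2) P(3)]) (use Bb \<delta> in auto)
    qed
  next
    fix \<delta> :: real assume \<delta>: "0 < \<delta>" "\<delta> < 1/2"
    have lim0: "((\<lambda>\<beta>. \<beta> powr k * sqrt \<beta> * exp (- (\<beta>-1) * \<delta>\<^sup>2 / 2)) \<longlongrightarrow> 0) at_top"
      using \<delta> by real_asymp
    have lim: "((\<lambda>\<beta>. \<beta> powr k * sqrt \<beta> * (exp (- (\<beta>-1) * \<delta>\<^sup>2 / 2) * C)) \<longlongrightarrow> 0) at_top"
      using tendsto_mult_right_zero[OF lim0, of C] by (simp add: mult_ac)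
    have "eventually (\<lambda>\<beta>. \<beta> powr k * sqrt \<beta> * (exp (- (\<beta>-1) * \<delta>\<^sup>2 / 2) * C) < \<delta>) at_top"
      by (rule order_tendstoD(2)[OF lim \<delta>(1)])
    moreover have "eventually (\<lambda>\<beta>::real. 1 \<le> \<beta>) at_top" by (rule eventually_ge_at_top)
    ultimately have "eventually (\<lambda>\<beta>. 1 \<le> \<beta> \<and> \<beta> powr k * sqrt \<beta> * (exp (- (\<beta>-1) * \<delta>\<^sup>2 / 2) * C) < \<delta>) at_top"
      by eventually_elim auto
    then obtain B where B: "\<And>\<beta>. \<beta> \<ge> B \<Longrightarrow> 1 \<le> \<beta> \<and> \<beta> powr k * sqrt \<beta> * (exp (- (\<beta>-1) * \<delta>\<^sup>2 / 2) * C) < \<delta>"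
      unfolding eventually_at_top_linorder by blast
    show "eventually (\<lambda>s. (1-\<delta>) powr k * (w powr k * sqrt w - \<delta>) / ((1+\<delta>)^(d-1) * sqrt w) \<le> s powr k * Aq q s) at_top"
      unfolding eventually_at_top_linorder
    proof (intro exI[of _ "B * (1 - \<delta>)"] allI impI)
      fix s assume s: "s \<ge> B * (1 - \<delta>)"
      define \<beta> where "\<beta> = s / (1 - \<delta>)"
      have sb: "s = \<beta> * (1 - \<delta>)" using \<delta> by (simp add: \<beta>_def)
      have "\<beta> \<ge> B" using s \<delta> by (simp add: \<beta>_def pos_le_divide_eq)
      note Bb = B[OF this]
      show "(1-\<delta>) powr k * (w powr k * sqrt w - \<delta>) / ((1+\<delta>)^(d-1) * sqrt w) \<le> s powr k * Aq q s"
        unfolding sb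
        by (rule lower_alg[OF _ _ _ Aq_nonneg w kd SW3[of \<beta> \<delta>]]) (use Bb \<delta> in auto)
    qed
  next
    have "((\<lambda>\<delta>. (1+\<delta>) powr k * w powr k / (1-\<delta>)^d) \<longlongrightarrow> (1+0) powr k * w powr k / (1-0)^d) (at_right 0)"
      by (intro tendsto_intros) auto
    then show "((\<lambda>\<delta>. (1+\<delta>) powr k * w powr k / (1-\<delta>)^d) \<longlongrightarrow> (2*pi) powr k) (at_right 0)"
      by (simp add: w_def)
  next
    have "((\<lambda>\<delta>. (1-\<delta>) powr k * (w powr k * sqrt w - \<delta>) / ((1+\<delta>)^(d-1) * sqrt w)) \<longlongrightarrow>
           (1-0) powr k * (w powr k * sqrt w - 0) / ((1+0)^(d-1) * sqrt w)) (at_right 0)"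
      using w by (intro tendsto_intros) auto
    then show "((\<lambda>\<delta>. (1-\<delta>) powr k * (w powr k * sqrt w - \<delta>) / ((1+\<delta>)^(d-1) * sqrt w)) \<longlongrightarrow> (2*pi) powr k) (at_right 0)"
      using w by (simp add: w_def)
  qed
qed

lemma tendsto_zero_epsI:
  fixes f :: "real \<Rightarrow> real"
  assumes K: "K > 0" and h: "\<And>\<epsilon>. \<epsilon> > 0 \<Longrightarrow> eventually (\<lambda>s. \<bar>f s\<bar> \<le> \<epsilon> * K) at_top"
  shows "(f \<longlongrightarrow> 0) at_top"
proof (rule tendstoI)
  fix e :: real assume e: "e > 0"
  have "eventually (\<lambda>s. \<bar>f s\<bar> \<le> (e / (2*K)) * K) at_top" using e K by (intro h) auto
  then show "eventually (\<lambda>s. dist (f s) 0 < e) at_top"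
    by eventually_elim (use e K in auto)
qed

lemma asymp_m:
  fixes q :: "'a::euclidean_space" and \<rho> :: "'a \<Rightarrow> real"
  assumes q: "norm q = 1"
    and rho_meas [measurable]: "\<rho> \<in> borel_measurable borel"
    and rho_nonneg: "\<forall>x\<in>sphere 0 1. \<rho> x \<ge> 0"
    and rho_int: "(\<integral>\<^sup>+ x. ennreal (\<rho> x) \<partial>sphere_surface_measure) = 1"
    and cont: "continuous (at q within sphere 0 1) \<rho>"
  defines "k \<equiv> (real DIM('a) - 1) / 2"
  shows "((\<lambda>s. s powr k * (\<integral> y. \<rho> y * exp (- s * (1 - inner q y)) \<partial>sphere_surface_measure))
           \<longlongrightarrow> \<rho> q * (2*pi) powr k) at_top"
proof -
  let ?\<sigma> = "sphere_surface_measure :: 'a measure"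
  interpret finite_measure ?\<sigma> by (rule finite_measure_ssm)
  define W where "W = (2*pi) powr k"
  define S0 where "S0 = measure ?\<sigma> UNIV"
  have S0: "S0 \<ge> 0" by (simp add: S0_def)
  have rq: "\<rho> q \<ge> 0" using rho_nonneg q by auto
  have AEs: "AE y in ?\<sigma>. norm y = 1 \<and> inner q y \<le> 1 \<and> 0 \<le> \<rho> y"
    using AE_ssm_inner[OF q] by eventually_elim (use rho_nonneg in auto)
  have rho_intg: "integrable ?\<sigma> \<rho>"
    by (rule integrableI_nonneg) (use AEs rho_int in auto)
  have rho_one: "(\<integral> y. \<rho> y \<partial>?\<sigma>) = 1"
    using nn_integral_eq_integral[OF rho_intg] AEs rho_int by (auto elim: eventually_mono)
  have intm: "integrable ?\<sigma> (\<lambda>y. \<rho> y * exp (- s * (1 - inner q y)))" if s: "s \<ge> 0" for s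
  proof (rule Bochner_Integration.integrable_bound[OF rho_intg])
    show "AE y in ?\<sigma>. norm (\<rho> y * exp (- s * (1 - inner q y))) \<le> norm (\<rho> y)"
      using AEs
    proof eventually_elim
      case (elim y)
      then have "- s * (1 - inner q y) \<le> 0" using s by (simp add: mult_nonneg_nonneg)
      then have "exp (- s * (1 - inner q y)) \<le> 1" by simp
      then show ?case using elim by (simp add: abs_mult mult_left_le)
    qed
  qed measurable
  have intA: "integrable ?\<sigma> (\<lambda>y. exp (- s * (1 - inner q y)))" if "s \<ge> 0" for s
    by (rule integrable_expT[OF q that])
  have Alim: "((\<lambda>s. s powr k * Aq q s) \<longlongrightarrow> W) at_top"
    unfolding W_def k_def by (rule asymp_A[OF q])
  have main: "((\<lambda>s. s powr k * (\<integral> y. \<rho> y * exp (- s * (1 - inner q y)) \<partial>?\<sigma>) - \<rho> q * (s powr k * Aq q s)) \<longlongrightarrow> 0) at_top"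
  proof (rule tendsto_zero_epsI[where K = "W + 2"])
    show "W + 2 > 0" by (simp add: W_def add_nonneg_pos)
    fix \<epsilon> :: real assume \<epsilon>: "\<epsilon> > 0"
    obtain \<delta> where \<delta>: "\<delta> > 0" "\<And>y. y \<in> sphere 0 1 \<Longrightarrow> dist y q < \<delta> \<Longrightarrow> dist (\<rho> y) (\<rho> q) < \<epsilon>"
      using cont \<epsilon> unfolding continuous_within_eps_delta by blast
    define \<eta> where "\<eta> = \<delta>\<^sup>2 / 2"
    have \<eta>: "\<eta> > 0" using \<delta> by (simp add: \<eta>_def)
    have near: "\<bar>\<rho> y - \<rho> q\<bar> < \<epsilon>" if "norm y = 1" "1 - inner q y < \<eta>" for y
    proof -
      have qq: "inner q q = 1" using q by (metis power2_norm_eq_inner power_one)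
      have yy: "inner y y = 1" using that(1) by (metis power2_norm_eq_inner power_one)
      have "(dist y q)\<^sup>2 = 2 * (1 - inner q y)"
        using qq yy by (simp add: dist_norm power2_norm_eq_inner inner_diff_left inner_diff_right inner_commute)
      also have "\<dots> < \<delta>\<^sup>2" using that(2) by (simp add: \<eta>_def)
      finally have "dist y q < \<delta>" using \<delta> by (simp add: power_less_imp_less_base)
      then show ?thesis using \<delta>(2)[of y] that(1) by (simp add: dist_real_def)
    qed
    define K0 where "K0 = 1 + \<rho> q * S0"
    have bnd: "\<bar>s powr k * (\<integral> y. \<rho> y * exp (- s * (1 - inner q y)) \<partial>?\<sigma>) - \<rho> q * (s powr k * Aq q s)\<bar>
        \<le> \<epsilon> * (s powr k * Aq q s) + s powr k * exp (- s * \<eta>) * K0" if s: "s \<ge> 0" for s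
    proof -
      let ?e = "\<lambda>y. exp (- s * (1 - inner q y))"
      have "(\<integral> y. \<rho> y * ?e y \<partial>?\<sigma>) - \<rho> q * Aq q s = (\<integral> y. (\<rho> y - \<rho> q) * ?e y \<partial>?\<sigma>)"
        unfolding Aq_def using intm[OF s] intA[OF s]
        by (simp add: left_diff_distrib integral_diff integral_mult_right)
      also have "\<bar>\<dots>\<bar> \<le> (\<integral> y. \<epsilon> * ?e y + exp (- s * \<eta>) * (\<rho> y + \<rho> q) \<partial>?\<sigma>)"
      proof -
        have "\<bar>(\<integral> y. (\<rho> y - \<rho> q) * ?e y \<partial>?\<sigma>)\<bar> \<le> (\<integral> y. \<bar>(\<rho> y - \<rho> q) * ?e y\<bar> \<partial>?\<sigma>)"
          by (rule integral_abs_bound)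
        also have "\<dots> \<le> (\<integral> y. \<epsilon> * ?e y + exp (- s * \<eta>) * (\<rho> y + \<rho> q) \<partial>?\<sigma>)"
        proof (rule integral_mono_AE)
          show "integrable ?\<sigma> (\<lambda>y. \<bar>(\<rho> y - \<rho> q) * ?e y\<bar>)"
            using intm[OF s] intA[OF s]
            by (intro integrable_abs) (simp add: left_diff_distrib)
          show "integrable ?\<sigma> (\<lambda>y. \<epsilon> * ?e y + exp (- s * \<eta>) * (\<rho> y + \<rho> q))"
            using intA[OF s] rho_intg by auto
          show "AE y in ?\<sigma>. \<bar>(\<rho> y - \<rho> q) * ?e y\<bar> \<le> \<epsilon> * ?e y + exp (- s * \<eta>) * (\<rho> y + \<rho> q)"
            using AEs
          proof eventually_elim
            case (elim y)
            show ?case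
            proof (cases "1 - inner q y < \<eta>")
              case True
              then have "\<bar>\<rho> y - \<rho> q\<bar> \<le> \<epsilon>" using near elim by force
              then have "\<bar>(\<rho> y - \<rho> q) * ?e y\<bar> \<le> \<epsilon> * ?e y" by (simp add: abs_mult mult_right_mono)
              moreover have "0 \<le> exp (- s * \<eta>) * (\<rho> y + \<rho> q)" using elim rq by simp
              ultimately show ?thesis by linarith
            next
              case False
              then have "s * \<eta> \<le> s * (1 - inner q y)" using s by (intro mult_left_mono) auto
              then have "?e y \<le> exp (- s * \<eta>)" by simp
              moreover have "\<bar>\<rho> y - \<rho> q\<bar> \<le> \<rho> y + \<rho> q" using elim rq by auto
              ultimately have "\<bar>(\<rho> y - \<rho> q) * ?e y\<bar> \<le> exp (- s * \<eta>) * (\<rho> y + \<rho> q)"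
                by (simp add: abs_mult mult.commute mult_mono)
              moreover have "0 \<le> \<epsilon> * ?e y" using \<epsilon> by simp
              ultimately show ?thesis by linarith
            qed
          qed
        qed
        finally show ?thesis .
      qed
      also have "\<dots> = \<epsilon> * Aq q s + exp (- s * \<eta>) * K0"
        unfolding Aq_def K0_def S0_def using intA[OF s] rho_intg
        by (simp add: integral_add integral_mult_right rho_one algebra_simps)
      finally have "\<bar>(\<integral> y. \<rho> y * ?e y \<partial>?\<sigma>) - \<rho> q * Aq q s\<bar> \<le> \<epsilon> * Aq q s + exp (- s * \<eta>) * K0" .
      then have "s powr k * \<bar>(\<integral> y. \<rho> y * ?e y \<partial>?\<sigma>) - \<rho> q * Aq q s\<bar> \<le> s powr k * (\<epsilon> * Aq q s + exp (- s * \<eta>) * K0)"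
        by (intro mult_left_mono) auto
      moreover have "s powr k * (\<integral> y. \<rho> y * ?e y \<partial>?\<sigma>) - \<rho> q * (s powr k * Aq q s) =
          s powr k * ((\<integral> y. \<rho> y * ?e y \<partial>?\<sigma>) - \<rho> q * Aq q s)"
        by (simp add: algebra_simps)
      ultimately show ?thesis by (simp only: abs_mult abs_of_nonneg powr_ge_zero) (simp add: algebra_simps)
    qed
    have e1: "eventually (\<lambda>s. s powr k * Aq q s < W + 1) at_top"
      using order_tendstoD(2)[OF Alim, of "W + 1"] by simp
    have l2: "((\<lambda>s. s powr k * exp (- s * \<eta>) * K0) \<longlongrightarrow> 0) at_top"
    proof -
      have "((\<lambda>s. s powr k * exp (- s * \<eta>)) \<longlongrightarrow> 0) at_top" using \<eta> by real_asymp
      from tendsto_mult_right_zero[OF this, of K0] show ?thesis by (simp add: mult_ac)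
    qed
    have e2: "eventually (\<lambda>s. s powr k * exp (- s * \<eta>) * K0 < \<epsilon>) at_top"
      by (rule order_tendstoD(2)[OF l2 \<epsilon>])
    show "eventually (\<lambda>s. \<bar>s powr k * (\<integral> y. \<rho> y * exp (- s * (1 - inner q y)) \<partial>?\<sigma>) - \<rho> q * (s powr k * Aq q s)\<bar> \<le> \<epsilon> * (W + 2)) at_top"
      using e1 e2 eventually_ge_at_top[of "0::real"]
    proof eventually_elim
      case (elim s)
      have "\<epsilon> * (s powr k * Aq q s) \<le> \<epsilon> * (W + 1)" using elim \<epsilon> by (intro mult_left_mono) auto
      then show ?case using bnd[OF elim(3)] elim(2) by (simp add: algebra_simps)
    qed
  qed
  have "((\<lambda>s. (s powr k * (\<integral> y. \<rho> y * exp (- s * (1 - inner q y)) \<partial>?\<sigma>) - \<rho> q * (s powr k * Aq q s)) + \<rho> q * (s powr k * Aq q s)) \<longlongrightarrow> 0 + \<rho> q * W) at_top"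
    by (intro tendsto_add main tendsto_mult_left Alim)
  then show ?thesis by (simp add: W_def)
qed

lemma intm_lemma:
  fixes q :: "'a::euclidean_space" and \<rho> :: "'a \<Rightarrow> real"
  assumes q: "norm q = 1"
    and rho_meas [measurable]: "\<rho> \<in> borel_measurable borel"
    and rho_nonneg: "\<forall>x\<in>sphere 0 1. \<rho> x \<ge> 0"
    and rho_int: "(\<integral>\<^sup>+ x. ennreal (\<rho> x) \<partial>sphere_surface_measure) = 1"
    and s: "s \<ge> 0"
  shows "integrable sphere_surface_measure (\<lambda>y. \<rho> y * exp (- s * (1 - inner q y)))"
proof -
  let ?\<sigma> = "sphere_surface_measure :: 'a measure"
  have AEs: "AE y in ?\<sigma>. norm y = 1 \<and> inner q y \<le> 1 \<and> 0 \<le> \<rho> y"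
    using AE_ssm_inner[OF q] by eventually_elim (use rho_nonneg in auto)
  have rho_intg: "integrable ?\<sigma> \<rho>"
    by (rule integrableI_nonneg) (use AEs rho_int in auto)
  show ?thesis
  proof (rule Bochner_Integration.integrable_bound[OF rho_intg])
    show "AE y in ?\<sigma>. norm (\<rho> y * exp (- s * (1 - inner q y))) \<le> norm (\<rho> y)"
      using AEs
    proof eventually_elim
      case (elim y)
      then have "- s * (1 - inner q y) \<le> 0" using s by (simp add: mult_nonneg_nonneg)
      then have "exp (- s * (1 - inner q y)) \<le> 1" by simp
      then show ?case using elim by (simp add: abs_mult mult_left_le)
    qed
  qed measurable
qed

lemma sum_if_eq:
  assumes "finite A" "i \<in> A"
  shows "(\<Sum>j\<in>A. if i = j then a else b) = a + real (card A - 1) * (b::real)"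
proof -
  have "(\<Sum>j\<in>A. if i = j then a else b) = (if i = i then a else b) + (\<Sum>j\<in>A - {i}. if i = j then a else b)"
    using assms by (rule sum.remove)
  also have "(\<Sum>j\<in>A - {i}. if i = j then a else b) = (\<Sum>j\<in>A - {i}. b)"
    by (intro sum.cong) auto
  finally show ?thesis using assms by (simp add: card_Diff_singleton)
qed

context prob_space
begin

context
  fixes X :: "nat \<Rightarrow> 'a \<Rightarrow> 'b::euclidean_space" and q :: 'b and \<rho> :: "'b \<Rightarrow> real"
  assumes q: "norm q = 1"
    and rho_meas [measurable]: "\<rho> \<in> borel_measurable borel"
    and rho_nonneg: "\<forall>x\<in>sphere 0 1. \<rho> x \<ge> 0"
    and rho_int: "(\<integral>\<^sup>+ x. ennreal (\<rho> x) \<partial>sphere_surface_measure) = 1"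
    and X_meas [measurable]: "\<And>i. X i \<in> measurable M borel"
    and X_indep: "indep_vars (\<lambda>_. borel) X UNIV"
    and X_law: "\<And>i. distr M borel (X i) = density sphere_surface_measure (\<lambda>x. ennreal (\<rho> x))"
begin

definition "mm s = (\<integral> y. \<rho> y * exp (- s * (1 - inner q y)) \<partial>(sphere_surface_measure :: 'b measure))"

lemma AE_X: "AE \<omega> in M. inner q (X j \<omega>) \<le> 1"
proof -
  have "AE y in density sphere_surface_measure (\<lambda>x. ennreal (\<rho> x)). inner q y \<le> 1"
    using AE_ssm_inner[OF q] by (subst AE_density) (auto elim: eventually_mono)
  then have "AE y in distr M borel (X j). inner q y \<le> 1" by (simp only: X_law)
  then show ?thesis by (subst (asm) AE_distr_iff) auto
qed

lemma Y_bound: "s \<ge> 0 \<Longrightarrow> AE \<omega> in M. 0 \<le> exp (- s * (1 - inner q (X j \<omega>))) \<and> exp (- s * (1 - inner q (X j \<omega>))) \<le> 1"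
  using AE_X[of j]
proof eventually_elim
  case (elim \<omega>)
  assume "s \<ge> 0"
  then have "- s * (1 - inner q (X j \<omega>)) \<le> 0" using elim by (simp add: mult_nonneg_nonneg)
  then show ?case by simp
qed

lemma EY:
  assumes s: "s \<ge> 0"
  shows "integrable M (\<lambda>\<omega>. exp (- s * (1 - inner q (X j \<omega>))))"
    and "expectation (\<lambda>\<omega>. exp (- s * (1 - inner q (X j \<omega>)))) = mm s"
proof -
  let ?f = "\<lambda>y::'b. exp (- s * (1 - inner q y))"
  have AEn: "AE y in sphere_surface_measure. 0 \<le> \<rho> y"
    using AE_ssm_norm by eventually_elim (use rho_nonneg in auto)
  show "integrable M (\<lambda>\<omega>. ?f (X j \<omega>))"
    using Y_bound[OF s, of j]
    by (intro integrable_const_bound[where B=1]) (auto elim: eventually_mono)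
  have "expectation (\<lambda>\<omega>. ?f (X j \<omega>)) = integral\<^sup>L (distr M borel (X j)) ?f"
    by (rule integral_distr[symmetric]) auto
  also have "\<dots> = integral\<^sup>L (density sphere_surface_measure (\<lambda>x. ennreal (\<rho> x))) ?f"
    by (simp add: X_law)
  also have "\<dots> = (\<integral> y. \<rho> y *\<^sub>R ?f y \<partial>sphere_surface_measure)"
    by (rule integral_density) (use AEn in auto)
  also have "\<dots> = mm s" by (simp add: mm_def)
  finally show "expectation (\<lambda>\<omega>. ?f (X j \<omega>)) = mm s" .
qed

lemma indep_pair:
  assumes "i \<noteq> j"
  shows "indep_var borel (X i) borel (X j)"
proof -
  have "indep_var borel ((\<lambda>f. f i) \<circ> (\<lambda>\<omega>. restrict (\<lambda>i. X i \<omega>) {i}))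
                  borel ((\<lambda>f. f j) \<circ> (\<lambda>\<omega>. restrict (\<lambda>i. X i \<omega>) {j}))"
    using assms by (intro indep_var_compose[OF indep_var_restrict[OF X_indep]]) auto
  also have "(\<lambda>f. f i) \<circ> (\<lambda>\<omega>. restrict (\<lambda>i. X i \<omega>) {i}) = X i" by auto
  also have "(\<lambda>f. f j) \<circ> (\<lambda>\<omega>. restrict (\<lambda>i. X i \<omega>) {j}) = X j" by auto
  finally show ?thesis .
qed

lemma EYY:
  assumes s: "s \<ge> 0"
  shows "expectation (\<lambda>\<omega>. exp (- s * (1 - inner q (X i \<omega>))) * exp (- s * (1 - inner q (X j \<omega>)))) =
     (if i = j then mm (2 * s) else (mm s)\<^sup>2)"
proof (cases "i = j")
  case True
  have "expectation (\<lambda>\<omega>. exp (- s * (1 - inner q (X i \<omega>))) * exp (- s * (1 - inner q (X j \<omega>)))) =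
        expectation (\<lambda>\<omega>. exp (- (2 * s) * (1 - inner q (X i \<omega>))))"
    using True by (simp add: exp_add[symmetric] algebra_simps)
  also have "\<dots> = mm (2 * s)" using s by (intro EY) auto
  finally show ?thesis using True by simp
next
  case False
  let ?f = "\<lambda>y::'b. exp (- s * (1 - inner q y))"
  have iv: "indep_var borel (?f \<circ> X i) borel (?f \<circ> X j)"
    by (rule indep_var_compose[OF indep_pair[OF False]]) auto
  have "expectation (\<lambda>\<omega>. (?f \<circ> X i) \<omega> * (?f \<circ> X j) \<omega>) = expectation (?f \<circ> X i) * expectation (?f \<circ> X j)"
    by (rule indep_var_lebesgue_integral[OF iv]) (use EY(1)[OF s] in \<open>auto simp: comp_def\<close>)
  then show ?thesis using False EY(2)[OF s] by (simp add: comp_def power2_eq_square)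
qed


lemma cheb:
  assumes s: "s \<ge> 0" and a: "a > 0"
  shows "prob {\<omega>\<in>space M. a \<le> \<bar>(\<Sum>j=1..n. exp (- s * (1 - inner q (X j \<omega>)))) - real n * mm s\<bar>}
           \<le> real n * mm (2 * s) / a\<^sup>2"
proof -
  define Y where "Y = (\<lambda>j \<omega>. exp (- s * (1 - inner q (X j \<omega>))))"
  define Z where "Z = (\<lambda>\<omega>. \<Sum>j=1..n. Y j \<omega>)"
  have [measurable]: "Y j \<in> borel_measurable M" for j unfolding Y_def by measurable
  have [measurable]: "Z \<in> borel_measurable M" unfolding Z_def by measurable
  have intY: "integrable M (Y j)" for j unfolding Y_def by (rule EY(1)[OF s])
  have EYj: "expectation (Y j) = mm s" for j unfolding Y_def by (rule EY(2)[OF s])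
  have AEb: "AE \<omega> in M. \<forall>j\<in>{1..n}. 0 \<le> Y j \<omega> \<and> Y j \<omega> \<le> 1"
    unfolding Y_def by (intro eventually_ball_finite finite_atLeastAtMost ballI Y_bound[OF s])
  have intYY: "integrable M (\<lambda>\<omega>. Y i \<omega> * Y j \<omega>)" for i j
  proof (rule integrable_const_bound[where B=1])
    show "AE \<omega> in M. norm (Y i \<omega> * Y j \<omega>) \<le> 1"
      using Y_bound[OF s, of i] Y_bound[OF s, of j]
      by eventually_elim (auto simp: Y_def abs_mult intro: mult_le_one)
  qed measurable
  have intZ: "integrable M Z" unfolding Z_def using intY by auto
  have Z2: "(Z \<omega>)\<^sup>2 = (\<Sum>i=1..n. \<Sum>j=1..n. Y i \<omega> * Y j \<omega>)" for \<omega>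
    unfolding Z_def power2_eq_square by (rule sum_product)
  have intZ2: "integrable M (\<lambda>\<omega>. (Z \<omega>)\<^sup>2)" unfolding Z2 using intYY by auto
  have EZ: "expectation Z = real n * mm s"
    unfolding Z_def using intY by (simp add: EYj)
  have "expectation (\<lambda>\<omega>. (Z \<omega>)\<^sup>2) = (\<Sum>i=1..n. \<Sum>j=1..n. expectation (\<lambda>\<omega>. Y i \<omega> * Y j \<omega>))"
    unfolding Z2 using intYY by (simp add: integral_sum)
  also have "\<dots> = (\<Sum>i=1..n. \<Sum>j=1..n. if i = j then mm (2 * s) else (mm s)\<^sup>2)"
    unfolding Y_def by (intro sum.cong refl EYY[OF s])
  also have "\<dots> = (\<Sum>i=1..n. mm (2 * s) + real (n - 1) * (mm s)\<^sup>2)"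
    by (intro sum.cong refl) (simp add: sum_if_eq)
  also have "\<dots> = real n * mm (2 * s) + real n * real (n - 1) * (mm s)\<^sup>2"
    by (cases n) (simp_all add: algebra_simps)
  finally have EZ2: "expectation (\<lambda>\<omega>. (Z \<omega>)\<^sup>2) = real n * mm (2 * s) + real n * real (n - 1) * (mm s)\<^sup>2" .
  have "variance Z = real n * mm (2 * s) + real n * real (n - 1) * (mm s)\<^sup>2 - (real n * mm s)\<^sup>2"
    using variance_eq[OF intZ intZ2] EZ EZ2 by simp
  also have "\<dots> \<le> real n * mm (2 * s)"
  proof (cases n)
    case (Suc m)
    then show ?thesis by (simp add: power2_eq_square algebra_simps)
  qed simp
  finally have V: "variance Z \<le> real n * mm (2 * s)" .
  have "prob {\<omega>\<in>space M. \<bar>Z \<omega> - expectation Z\<bar> \<ge> a} \<le> variance Z / a\<^sup>2"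
    by (rule Chebyshev_inequality) (use intZ2 a in auto)
  also have "\<dots> \<le> real n * mm (2 * s) / a\<^sup>2"
    using V a by (simp add: divide_right_mono)
  finally have "prob {\<omega>\<in>space M. a \<le> \<bar>Z \<omega> - real n * mm s\<bar>} \<le> real n * mm (2 * s) / a\<^sup>2"
    unfolding EZ by (simp add: abs_minus_commute)
  then show ?thesis unfolding Z_def Y_def .
qed


lemma EZ_explicit:
  assumes s: "s \<ge> 0"
  shows "expectation (\<lambda>\<omega>. \<Sum>j=1..n. exp (- s * (1 - inner q (X j \<omega>)))) =
     real n * (\<integral> y. \<rho> y * exp (- s * (1 - inner q y)) \<partial>(sphere_surface_measure :: 'b measure))"
  using EY[OF s] by (simp add: integral_sum mm_def)

lemma cheb':
  assumes s: "s \<ge> 0" and a: "a > 0"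
  shows "prob {\<omega>\<in>space M. a \<le> \<bar>(\<Sum>j=1..n. exp (- s * (1 - inner q (X j \<omega>)))) -
      real n * (\<integral> y. \<rho> y * exp (- s * (1 - inner q y)) \<partial>(sphere_surface_measure :: 'b measure))\<bar>}
           \<le> real n * (\<integral> y. \<rho> y * exp (- (2 * s) * (1 - inner q y)) \<partial>(sphere_surface_measure :: 'b measure)) / a\<^sup>2"
  using cheb[OF s a, of n] unfolding mm_def .

end
end

lemma conv_in_prob_mult:
  assumes P: "prob_space M"
    and Ym: "\<And>n. Y n \<in> borel_measurable M"
    and conv: "conv_in_prob M Y (\<lambda>_. 1)"
    and c: "c \<longlonglongrightarrow> 1"
    and ev: "eventually (\<lambda>n. \<forall>\<omega>\<in>space M. Y' n \<omega> = Y n \<omega> * c n) sequentially"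
  shows "conv_in_prob M Y' (\<lambda>_. 1)"
  unfolding conv_in_prob_def
proof (intro allI impI)
  interpret prob_space M by (rule P)
  fix e :: real assume e: "e > 0"
  have l: "(\<lambda>n. measure M {\<omega>\<in>space M. \<bar>Y n \<omega> - 1\<bar> > e/4}) \<longlonglongrightarrow> 0"
    by (rule conv[unfolded conv_in_prob_def, rule_format]) (use e in simp)
  have "eventually (\<lambda>n. dist (c n) 1 < min (e/2) 1) sequentially"
    using tendstoD[OF c, of "min (e/2) 1"] e by auto
  then have evc: "eventually (\<lambda>n. \<bar>c n - 1\<bar> < e/2 \<and> \<bar>c n\<bar> \<le> 2) sequentially"
    by eventually_elim (auto simp: dist_real_def)
  show "(\<lambda>n. measure M {\<omega>\<in>space M. \<bar>Y' n \<omega> - 1\<bar> > e}) \<longlonglongrightarrow> 0"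
  proof (rule tendsto_sandwich[OF _ _ tendsto_const l])
    show "eventually (\<lambda>n. 0 \<le> measure M {\<omega>\<in>space M. \<bar>Y' n \<omega> - 1\<bar> > e}) sequentially" by simp
    show "eventually (\<lambda>n. measure M {\<omega>\<in>space M. \<bar>Y' n \<omega> - 1\<bar> > e} \<le> measure M {\<omega>\<in>space M. \<bar>Y n \<omega> - 1\<bar> > e/4}) sequentially"
      using ev evc
    proof eventually_elim
      case (elim n)
      have sub: "{\<omega>\<in>space M. \<bar>Y' n \<omega> - 1\<bar> > e} \<subseteq> {\<omega>\<in>space M. \<bar>Y n \<omega> - 1\<bar> > e/4}"
      proof safe
        fix \<omega> assume \<omega>: "\<omega> \<in> space M" "\<bar>Y' n \<omega> - 1\<bar> > e"
        show "\<bar>Y n \<omega> - 1\<bar> > e/4"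
        proof (rule ccontr)
          assume "\<not> \<bar>Y n \<omega> - 1\<bar> > e/4"
          then have h: "\<bar>Y n \<omega> - 1\<bar> \<le> e/4" by simp
          have "Y' n \<omega> - 1 = c n * (Y n \<omega> - 1) + (c n - 1)" using elim \<omega> by (simp add: algebra_simps)
          then have "\<bar>Y' n \<omega> - 1\<bar> \<le> \<bar>c n\<bar> * \<bar>Y n \<omega> - 1\<bar> + \<bar>c n - 1\<bar>"
            by (simp add: abs_mult[symmetric] abs_triangle_ineq)
          also have "\<dots> \<le> 2 * (e/4) + \<bar>c n - 1\<bar>"
            using elim h by (intro add_right_mono mult_mono) auto
          finally show False using elim \<omega> by simp
        qed
      qed
      have "{\<omega>\<in>space M. \<bar>Y n \<omega> - 1\<bar> > e/4} \<in> sets M" using Ym[of n] by measurable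
      then show ?case using sub by (intro finite_measure_mono)
    qed
  qed
qed

lemma Cq_eq:
  fixes d :: nat and r :: real
  assumes d: "d \<ge> 2"
  defines "\<alpha> \<equiv> 2 / (real d - 1)"
  shows "2 powr (1 / \<alpha>) * sphere_area (d - 2) / (real d - 1) * r * Gamma (1 / \<alpha> + 1)
         = r * (2*pi) powr ((real d - 1) / 2)"
proof -
  define k where "k = (real d - 1) / 2"
  have k: "k > 0" using d by (simp add: k_def)
  have ak: "1 / \<alpha> = k" by (simp add: \<alpha>_def k_def)
  have dd: "real (d - 2 + 1) = real d - 1" using d by (simp add: of_nat_diff)
  have sa: "sphere_area (d - 2) = (real d - 1) * (pi powr k / Gamma (k + 1))"
    unfolding sphere_area_def unit_ball_vol_def dd by (simp add: k_def)
  have G: "Gamma (k + 1) > 0" using k by (intro Gamma_real_pos) auto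
  have d1: "real d - 1 > 0" using d by simp
  show ?thesis unfolding ak sa k_def[symmetric]
    using G d1 by (simp add: powr_mult field_simps)
qed

lemma powr_beta_n:
  fixes b a k :: real and n :: nat
  assumes b: "b > 0" and n: "n > 0" and ak: "a * k = 1"
  shows "(b * real n powr (- a)) powr k = b powr k / real n"
proof -
  have "(b * real n powr (- a)) powr k = b powr k * (real n powr (- a)) powr k"
    using b n by (simp add: powr_mult)
  also have "(real n powr (- a)) powr k = real n powr (- 1)"
    using ak by (simp add: powr_powr)
  also have "real n powr (- 1) = 1 / real n" using n by (simp add: powr_minus_divide)
  finally show ?thesis by simp
qed

theorem mainTheorem10:
  fixes M :: "'s measure"
    and X :: "nat \<Rightarrow> 's \<Rightarrow> real ^ 'n"
    and \<rho> :: "real ^ 'n \<Rightarrow> real"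
    and q :: "real ^ 'n"
    and \<beta> :: "nat \<Rightarrow> real"
  defines "d \<equiv> CARD('n)"
  defines "\<alpha> \<equiv> 2 / (real d - 1)"
  defines "Z \<equiv> (\<lambda>n \<omega>. \<Sum>j=1..n. exp (- \<beta> n * (1 - inner q (X j \<omega>))))"
  defines "Cq \<equiv> 2 powr (1 / \<alpha>) * sphere_area (d - 2) / (real d - 1) * \<rho> q"
  assumes d2: "d \<ge> 2"
    and P: "prob_space M"
    and rho_meas: "\<rho> \<in> borel_measurable borel"
    and rho_nonneg: "\<forall>x\<in>sphere 0 1. \<rho> x \<ge> 0"
    and rho_C2: "C2_on_sphere \<rho>"
    and rho_int: "(\<integral>\<^sup>+ x. ennreal (\<rho> x) \<partial>sphere_surface_measure) = 1"
    and q_sph: "q \<in> sphere 0 1"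
    and rho_q: "\<rho> q > 0"
    and X_meas: "\<forall>i. X i \<in> measurable M borel"
    and X_indep: "prob_space.indep_vars M (\<lambda>_. borel) X UNIV"
    and X_law: "\<forall>i. distr M borel (X i) = density sphere_surface_measure (\<lambda>x. ennreal (\<rho> x))"
    and beta_pos: "\<forall>n. \<beta> n > 0"
    and beta_inf: "filterlim \<beta> at_top sequentially"
    and beta_small: "(\<lambda>n. \<beta> n * real n powr (- \<alpha>)) \<longlonglongrightarrow> 0"
  shows "conv_in_prob M (\<lambda>n \<omega>. Z n \<omega> / prob_space.expectation M (Z n)) (\<lambda>_. 1)
       \<and> conv_in_prob M
           (\<lambda>n \<omega>. Z n \<omega> / (Cq * real n * \<beta> n powr (- 1 / \<alpha>) * Gamma (1 / \<alpha> + 1)))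
           (\<lambda>_. 1)"
proof -
  interpret prob_space M by (rule P)
  let ?\<sigma> = "sphere_surface_measure :: (real ^ 'n) measure"
  have dD: "DIM(real ^ 'n) = d" by (simp add: d_def)
  define k where "k = (real d - 1) / 2"
  have k: "k > 0" using d2 by (simp add: k_def)
  have dpos: "real d - 1 > 0" using d2 by simp
  have ak: "1 / \<alpha> = k" "\<alpha> * k = 1" "- 1 / \<alpha> = - k"
    using dpos by (auto simp: \<alpha>_def k_def field_simps)
  have q: "norm q = 1" using q_sph by simp
  have cont: "continuous (at q within sphere 0 1) \<rho>"
  proof -
    obtain U g where U: "open U" "sphere 0 1 \<subseteq> U" "C2_on U g" "\<forall>x\<in>sphere 0 1. g x = \<rho> x"
      using rho_C2 unfolding C2_on_sphere_def by blast
    then obtain D :: "real ^ 'n \<Rightarrow> ((real ^ 'n) \<Rightarrow>\<^sub>L real)" where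
      "\<forall>x\<in>U. (g has_derivative blinfun_apply (D x)) (at x)"
      unfolding C2_on_def by blast
    then have "(g has_derivative blinfun_apply (D q)) (at q)" using U(2) q_sph by auto
    then have "continuous (at q) g" by (rule has_derivative_continuous)
    then have "continuous (at q within sphere 0 1) g" by (rule continuous_at_imp_continuous_within)
    then show ?thesis
      by (rule continuous_transform_within[where \<delta> = 1]) (use q_sph U(4) in auto)
  qed
  define m where "m s = (\<integral> y. \<rho> y * exp (- s * (1 - inner q y)) \<partial>?\<sigma>)" for s
  define K where "K = \<rho> q * (2*pi) powr k"
  have K: "K > 0" using rho_q by (simp add: K_def)
  have mlim: "((\<lambda>s. s powr k * m s) \<longlongrightarrow> K) at_top"
    using asymp_m[OF q rho_meas rho_nonneg rho_int cont] unfolding m_def K_def k_def dD .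
  have b2inf: "filterlim (\<lambda>n. 2 * \<beta> n) at_top sequentially"
    by (rule filterlim_tendsto_pos_mult_at_top[OF tendsto_const _ beta_inf]) simp
  have b1: "(\<lambda>n. \<beta> n powr k * m (\<beta> n)) \<longlonglongrightarrow> K"
    by (rule filterlim_compose[OF mlim beta_inf])
  have b2: "(\<lambda>n. (2 * \<beta> n) powr k * m (2 * \<beta> n)) \<longlonglongrightarrow> K"
    by (rule filterlim_compose[OF mlim b2inf])
  have XM: "\<And>i. X i \<in> measurable M borel" using X_meas by auto
  have XL: "\<And>i. distr M borel (X i) = density sphere_surface_measure (\<lambda>x. ennreal (\<rho> x))" using X_law by auto
  have EZ: "expectation (Z n) = real n * m (\<beta> n)" for n
    unfolding Z_def m_def
    by (rule EZ_explicit[OF q rho_meas rho_nonneg rho_int XM X_indep XL]) (use beta_pos in \<open>auto intro: less_imp_le\<close>)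
  have Zm [measurable]: "Z n \<in> borel_measurable M" for n
    unfolding Z_def using XM by measurable
  have mpos: "eventually (\<lambda>n. m (\<beta> n) > 0) sequentially"
  proof -
    have "eventually (\<lambda>n. \<beta> n powr k * m (\<beta> n) > 0) sequentially"
      by (rule order_tendstoD(1)[OF b1 K])
    then show ?thesis
    proof eventually_elim
      case (elim n)
      then show ?case using beta_pos[rule_format, of n] by (simp add: zero_less_mult_iff)
    qed
  qed
  have npos: "eventually (\<lambda>n::nat. n > 0) sequentially" by (rule eventually_gt_at_top)
  have part1: "conv_in_prob M (\<lambda>n \<omega>. Z n \<omega> / expectation (Z n)) (\<lambda>_. 1)"
    unfolding conv_in_prob_def
  proof (intro allI impI)
    fix e :: real assume e: "e > 0"
    define bnd where "bnd n = (1 / e\<^sup>2) * ((2 * \<beta> n) powr k * m (2 * \<beta> n)) / (\<beta> n powr k * m (\<beta> n))\<^sup>2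
        * 2 powr (- k) * (\<beta> n * real n powr (- \<alpha>)) powr k" for n
    have bl: "bnd \<longlonglongrightarrow> (1 / e\<^sup>2) * K / K\<^sup>2 * 2 powr (- k) * 0"
      unfolding bnd_def
    proof (intro tendsto_intros b1 b2)
      show "(\<lambda>n. (\<beta> n * real n powr (- \<alpha>)) powr k) \<longlonglongrightarrow> 0"
        by (rule tendsto_zero_powrI[OF beta_small tendsto_const _ k])
           (use beta_pos in \<open>auto intro!: always_eventually mult_nonneg_nonneg simp: less_imp_le\<close>)
      show "K\<^sup>2 \<noteq> 0" using K by simp
    qed
    then have bl0: "bnd \<longlonglongrightarrow> 0" by simp
    show "(\<lambda>n. measure M {\<omega>\<in>space M. \<bar>Z n \<omega> / expectation (Z n) - 1\<bar> > e}) \<longlonglongrightarrow> 0"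
    proof (rule tendsto_sandwich[OF _ _ tendsto_const bl0])
      show "eventually (\<lambda>n. 0 \<le> measure M {\<omega>\<in>space M. \<bar>Z n \<omega> / expectation (Z n) - 1\<bar> > e}) sequentially"
        by simp
      show "eventually (\<lambda>n. measure M {\<omega>\<in>space M. \<bar>Z n \<omega> / expectation (Z n) - 1\<bar> > e} \<le> bnd n) sequentially"
        using mpos npos
      proof eventually_elim
        case (elim n)
        have bp: "\<beta> n > 0" using beta_pos by auto
        define E where "E = real n * m (\<beta> n)"
        have E: "E > 0" using elim by (simp add: E_def)
        have sub: "{\<omega>\<in>space M. \<bar>Z n \<omega> / expectation (Z n) - 1\<bar> > e} \<subseteq> {\<omega>\<in>space M. e * E \<le> \<bar>Z n \<omega> - E\<bar>}"
        proof safe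
          fix \<omega> assume a: "\<omega> \<in> space M" "\<bar>Z n \<omega> / expectation (Z n) - 1\<bar> > e"
          have ez: "expectation (Z n) = E" unfolding E_def by (rule EZ)
          have "Z n \<omega> / expectation (Z n) - 1 = (Z n \<omega> - E) / E"
            unfolding ez using E by (simp add: diff_divide_distrib)
          then have "e < \<bar>Z n \<omega> - E\<bar> / E" using a(2) E by (simp only: abs_divide abs_of_pos)
          then have "e * E < \<bar>Z n \<omega> - E\<bar>" using E by (simp only: pos_less_divide_eq)
          then show "e * E \<le> \<bar>Z n \<omega> - E\<bar>" by simp
        qed
        have "measure M {\<omega>\<in>space M. \<bar>Z n \<omega> / expectation (Z n) - 1\<bar> > e} \<le> prob {\<omega>\<in>space M. e * E \<le> \<bar>Z n \<omega> - E\<bar>}"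
          by (rule finite_measure_mono[OF sub]) measurable
        also have "\<dots> \<le> real n * m (2 * \<beta> n) / (e * E)\<^sup>2"
          using cheb'[OF q rho_meas rho_nonneg rho_int XM X_indep XL, of "\<beta> n" "e * E" n] bp e E
          unfolding Z_def E_def m_def by simp
        also have "\<dots> = bnd n"
        proof -
          have p1: "(2 * \<beta> n) powr k = 2 powr k * \<beta> n powr k" using bp by (simp add: powr_mult)
          have p2: "(\<beta> n * real n powr (- \<alpha>)) powr k = \<beta> n powr k / real n"
            using powr_beta_n[OF bp elim(2) ak(2)] .
          have p3: "2 powr (- k) * 2 powr k = (1::real)" by (simp add: powr_add[symmetric])
          have bk: "\<beta> n powr k > 0" using bp by simp
          show ?thesis unfolding bnd_def p1 p2 E_def
            using elim bk e p3 by (simp add: field_simps power2_eq_square)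
        qed
        finally show ?case .
      qed
    qed
  qed
  have part2: "conv_in_prob M (\<lambda>n \<omega>. Z n \<omega> / (Cq * real n * \<beta> n powr (- 1 / \<alpha>) * Gamma (1 / \<alpha> + 1))) (\<lambda>_. 1)"
  proof (rule conv_in_prob_mult[OF P _ part1])
    show "(\<lambda>n \<omega>. Z n \<omega> / expectation (Z n)) n \<in> borel_measurable M" for n by measurable
    show "(\<lambda>n. \<beta> n powr k * m (\<beta> n) / K) \<longlonglongrightarrow> 1"
      using tendsto_divide[OF b1 tendsto_const[of K]] K by simp
    have CK: "Cq * Gamma (1 / \<alpha> + 1) = K"
      unfolding Cq_def K_def k_def \<alpha>_def using Cq_eq[OF d2, of "\<rho> q"] by simp
    show "eventually (\<lambda>n. \<forall>\<omega>\<in>space M. Z n \<omega> / (Cq * real n * \<beta> n powr (- 1 / \<alpha>) * Gamma (1 / \<alpha> + 1)) =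
        Z n \<omega> / expectation (Z n) * (\<beta> n powr k * m (\<beta> n) / K)) sequentially"
      using mpos npos
    proof eventually_elim
      case (elim n)
      have bp: "\<beta> n > 0" using beta_pos by auto
      have bk: "\<beta> n powr k > 0" using bp by simp
      have den: "Cq * real n * \<beta> n powr (- 1 / \<alpha>) * Gamma (1 / \<alpha> + 1) = K * real n / \<beta> n powr k"
        using CK unfolding ak(3) by (simp add: powr_minus field_simps)
      show ?case unfolding den EZ using elim bk K by (auto simp: field_simps)
    qed
  qed
  show ?thesis using part1 part2 by simp
qed

end
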